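(* Let $W_d$ be a subgroup of the Higman–Thompson group $V_d$ containing the commutator subgroup $[F_d,F_d]$. Then every non-trivial element of $W_d$ has infinitely many $[F_d,F_d]$-conjugates (so in particular $W_d$ is ICC); equivalently, the inclusion $L([F_d,F_d])\subseteq L(W_d)$ is irreducible. In particular, if $W_d$ contains $F_d$, then the inclusion $L(F_d)\subseteq L(W_d)$ is also irreducible.
   Context: Fix $d\ge 2$. A $d$-ary tree is a finite rooted tree in which each non-leaf vertex has exactly $d$ ordered children; leaves are numbered $1,\dots,n$ left to right; $T_k$ is $T$ with a $d$-ary caret attached to its $k$-th leaf. For $\sigma\in S_n$, $1\le k\le n$, partition $\{1,\dots,n+d-1\}$ into consecutive blocks $B^{(k)}_j=\{j\}$ ($j<k$), $B^{(k)}_k=\{k,\dots,k+d-1\}$, $B^{(k)}_j=\{j+d-1\}$ ($j>k$), and let $(\sigma)\varsigma_k^n\in S_{n+d-1}$ map $B^{(k)}_j$ onto $B^{(\sigma(k))}_{\sigma(j)}$ order-preservingly. The Higman–Thompson group $V_d$ is the group of classes $[T,\sigma,U]$ of triples with $T,U$ $d$-ary trees with $n$ leaves and $\sigma\in S_n$, under the equivalence generated by $(T,\sigma,U)\sim(T_{\sigma(k)},(\sigma)\varsigma_k^n,U_k)$, with product $[T,\sigma,U][U,\tau,W]=[T,\sigma\tau,W]$. $F_d$ is the subgroup of elements $[T,\mathrm{id},U]$, and $[F_d,F_d]$ its commutator subgroup. An inclusion of von Neumann algebras $N\subseteq M$ is irreducible if $N'\cap M\subseteq N$ (for a factor $N$: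 $N'\cap M=\mathbb{C}1$). $L(G)$ denotes the group von Neumann algebra. *)

theory Defs
  imports "HOL-Algebra.Algebra" "HOL-Combinatorics.Permutations"
begin

datatype tree = Leaf | Node "tree list"

fun dary :: "nat \<Rightarrow> tree \<Rightarrow> bool" where
  "dary d Leaf = True"
| "dary d (Node ts) = (length ts = d \<and> (\<forall>t\<in>set ts. dary d t))"

fun nleaves :: "tree \<Rightarrow> nat" where
  "nleaves Leaf = 1"
| "nleaves (Node ts) = sum_list (map nleaves ts)"

text \<open>attach d k T: T with a d-ary caret attached to its k-th leaf (leaves numbered
  1,2,... from left to right).\<close>
fun attach :: "nat \<Rightarrow> nat \<Rightarrow> tree \<Rightarrow> tree"
and attachs :: "nat \<Rightarrow> nat \<Rightarrow> tree list \<Rightarrow> tree list" where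
  "attach d k Leaf = (if k = 1 then Node (replicate d Leaf) else Leaf)"
| "attach d k (Node ts) = Node (attachs d k ts)"
| "attachs d k [] = []"
| "attachs d k (t # ts) = attach d k t # attachs d (k - nleaves t) ts"

text \<open>Index of the block B^(k)_j containing i.\<close>
definition blk :: "nat \<Rightarrow> nat \<Rightarrow> nat \<Rightarrow> nat" where
  "blk d k i = (if i < k then i else if i < k + d then k else i - (d - 1))"

definition bstart :: "nat \<Rightarrow> nat \<Rightarrow> nat \<Rightarrow> nat" where
  "bstart d k j = (if j < k then j else if j = k then k else j + d - 1)"

definition boff :: "nat \<Rightarrow> nat \<Rightarrow> nat \<Rightarrow> nat" where
  "boff d k i = (if k \<le> i \<and> i < k + d then i - k else 0)"

text \<open>(sigma) varsigma_k^n : maps B^(k)_j order-preservingly onto B^(sigma k)_(sigma j);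
  identity outside {1..n+d-1}.\<close>
definition sigma_ext :: "nat \<Rightarrow> nat \<Rightarrow> (nat \<Rightarrow> nat) \<Rightarrow> nat \<Rightarrow> nat \<Rightarrow> nat" where
  "sigma_ext d n \<sigma> k i =
     (if i \<in> {1..n + d - 1} then bstart d (\<sigma> k) (\<sigma> (blk d k i)) + boff d k i else i)"

type_synonym triple = "tree \<times> (nat \<Rightarrow> nat) \<times> tree"

definition valid :: "nat \<Rightarrow> triple set" where
  "valid d = {(T, \<sigma>, U). dary d T \<and> dary d U \<and> nleaves T = nleaves U
                         \<and> \<sigma> permutes {1..nleaves U}}"

definition expand :: "nat \<Rightarrow> triple rel" where
  "expand d = {((T, \<sigma>, U), (attach d (\<sigma> k) T, sigma_ext d (nleaves U) \<sigma> k, attach d k U))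
               | T \<sigma> U k. (T, \<sigma>, U) \<in> valid d \<and> 1 \<le> k \<and> k \<le> nleaves U}"

definition treq :: "nat \<Rightarrow> triple rel" where
  "treq d = Id_on (valid d) \<union> (expand d \<union> (expand d)\<inverse>)\<^sup>+"

definition cls :: "nat \<Rightarrow> triple \<Rightarrow> triple set" where
  "cls d x = treq d `` {x}"

text \<open>V_d with product [T,sigma,U][U,tau,W] = [T, sigma tau, W]; sigma tau is the
  composition (sigma tau)(i) = sigma(tau(i)), consistent with the convention that
  sigma maps leaf k of U to leaf sigma(k) of T in the expansion rule.\<close>
definition vmult :: "nat \<Rightarrow> triple set \<Rightarrow> triple set \<Rightarrow> triple set" where
  "vmult d a b = (THE c. \<exists>T \<sigma> U \<tau> W. (T, \<sigma>, U) \<in> a \<and> (U, \<tau>, W) \<in> b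
                            \<and> c = cls d (T, \<sigma> \<circ> \<tau>, W))"

definition V :: "nat \<Rightarrow> triple set monoid" where
  "V d = \<lparr> carrier = valid d // treq d, monoid.mult = vmult d, one = cls d (Leaf, id, Leaf) \<rparr>"

definition F :: "nat \<Rightarrow> triple set set" where
  "F d = {a \<in> carrier (V d). \<exists>T U. (T, id, U) \<in> a}"

definition conjugates :: "('a, 'b) monoid_scheme \<Rightarrow> 'a set \<Rightarrow> 'a \<Rightarrow> 'a set" where
  "conjugates G H g = {inv\<^bsub>G\<^esub> h \<otimes>\<^bsub>G\<^esub> g \<otimes>\<^bsub>G\<^esub> h | h. h \<in> H}"

end

theory Submission
  imports Defs "HOL-Library.Sublist"
begin


fun leaves :: "tree \<Rightarrow> nat list list"
and leavess :: "nat \<Rightarrow> tree list \<Rightarrow> nat list list" where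
  "leaves Leaf = [[]]"
| "leaves (Node ts) = leavess 0 ts"
| "leavess i [] = []"
| "leavess i (t # ts) = map (Cons i) (leaves t) @ leavess (Suc i) ts"

lemma length_leaves:
  "length (leaves T) = nleaves T"
  "length (leavess i ts) = sum_list (map nleaves ts)"
  by (induction T and i ts rule: leaves_leavess.induct) auto

lemma set_leavess:
  "p \<in> set (leavess i ts) \<longleftrightarrow> (\<exists>j<length ts. \<exists>q. p = (i+j) # q \<and> q \<in> set (leaves (ts!j)))"
proof (induction ts arbitrary: i)
  case Nil then show ?case by simp
next
  case (Cons t ts)
  show ?case
  proof
    assume "p \<in> set (leavess i (t # ts))"
    then show "\<exists>j<length (t#ts). \<exists>q. p = (i+j) # q \<and> q \<in> set (leaves ((t#ts)!j))"
      using Cons[of "Suc i"] by (auto; metis add_Suc_right Suc_less_eq nth_Cons_Suc)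
  next
    assume "\<exists>j<length (t#ts). \<exists>q. p = (i+j) # q \<and> q \<in> set (leaves ((t#ts)!j))"
    then obtain j q where j: "j < length (t#ts)" "p = (i+j)#q" "q \<in> set (leaves ((t#ts)!j))" by blast
    show "p \<in> set (leavess i (t # ts))"
    proof (cases j)
      case 0 then show ?thesis using j by auto
    next
      case (Suc j') then show ?thesis using j Cons[of "Suc i"] by auto
    qed
  qed
qed

lemma set_leaves_Node:
  "i # q \<in> set (leaves (Node ts)) \<longleftrightarrow> i < length ts \<and> q \<in> set (leaves (ts!i))"
  by (auto simp: set_leavess)

lemma Nil_notin_Node: "[] \<notin> set (leaves (Node ts))"
  by (auto simp: set_leavess)

lemma leaves_prefix_free:
  "p \<in> set (leaves T) \<Longrightarrow> q \<in> set (leaves T) \<Longrightarrow> prefix p q \<Longrightarrow> p = q"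
proof (induction T arbitrary: p q)
  case Leaf then show ?case by simp
next
  case (Node ts)
  from Node.prems(1) obtain i p' where p: "p = i # p'" "i < length ts" "p' \<in> set (leaves (ts!i))"
    by (auto simp: set_leavess)
  from Node.prems(2) obtain j q' where q: "q = j # q'" "j < length ts" "q' \<in> set (leaves (ts!j))"
    by (auto simp: set_leavess)
  from Node.prems(3) p q have "i = j" "prefix p' q'" by auto
  with Node.IH[of "ts!i" p' q'] p q show ?case by auto
qed

lemma distinct_leaves:
  "distinct (leaves T)" "distinct (leavess i ts)"
proof (induction T and i ts rule: leaves_leavess.induct)
  case (4 i t ts)
  have "set (map (Cons i) (leaves t)) \<inter> set (leavess (Suc i) ts) = {}"
    by (auto simp: set_leavess)
  with 4 show ?case by (auto simp: distinct_map)
qed auto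

lemma leaves_letters:
  "dary d T \<Longrightarrow> p \<in> set (leaves T) \<Longrightarrow> a \<in> set p \<Longrightarrow> a < d"
proof (induction T arbitrary: p)
  case Leaf then show ?case by simp
next
  case (Node ts)
  from Node.prems obtain i p' where p: "p = i # p'" "i < length ts" "p' \<in> set (leaves (ts!i))"
    by (auto simp: set_leavess)
  show ?case using Node.prems p Node.IH[of "ts!i" p'] by auto
qed

lemma leaves_determine:
  assumes "dary d T" "dary d T'" "set (leaves T) = set (leaves T')"
  shows "T = T'"
  using assms
proof (induction T arbitrary: T')
  case Leaf then show ?case
  proof (cases T')
    case (Node x2) then show ?thesis using Leaf.prems(3) Nil_notin_Node[of x2] by auto
  qed simp
next
  case (Node ts)
  show ?case
  proof (cases T')
    case Leaf then show ?thesis using Node.prems Nil_notin_Node by (metis leaves.simps(1) list.set_intros(1))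
  next
    case (Node ts')
    have len: "length ts = length ts'" using Node.prems \<open>T' = Node ts'\<close> by auto
    have "ts ! i = ts' ! i" if "i < length ts" for i
    proof -
      have "set (leaves (ts!i)) = set (leaves (ts'!i))"
        using Node.prems(3) \<open>T' = Node ts'\<close> that len
        by (auto simp: set_leaves_Node[symmetric]; metis set_leaves_Node)
      then show ?thesis using Node.IH[of "ts!i" "ts'!i"] Node.prems \<open>T' = Node ts'\<close> that len
        by auto
    qed
    then show ?thesis using len \<open>T' = Node ts'\<close> by (simp add: nth_equalityI)
  qed
qed


lemma leavess_replicate_Leaf: "leavess i (replicate m Leaf) = map (\<lambda>a. [a]) [i..<i+m]"
  by (induction m arbitrary: i) (auto simp: upt_rec)

lemma leavess_append: "leavess i (xs @ ys) = leavess i xs @ leavess (i + length xs) ys"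
  by (induction xs arbitrary: i) auto

lemma attach_out:
  "k = 0 \<or> nleaves T < k \<Longrightarrow> attach d k T = T"
  "k = 0 \<or> sum_list (map nleaves ts) < k \<Longrightarrow> attachs d k ts = ts"
  by (induction d k T and d k ts rule: attach_attachs.induct) auto

lemma attach_nleaves:
  shows "d \<ge> 1 \<Longrightarrow> 1 \<le> k \<and> k \<le> nleaves T \<Longrightarrow> nleaves (attach d k T) = nleaves T + (d - 1)"
    "d \<ge> 1 \<Longrightarrow> 1 \<le> k \<and> k \<le> sum_list (map nleaves ts) \<Longrightarrow>
       sum_list (map nleaves (attachs d k ts)) = sum_list (map nleaves ts) + (d - 1)"
proof (induction d k T and d k ts rule: attach_attachs.induct)
  case (1 d k)
  then show ?case by (auto simp: sum_list_replicate)
next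
  case (4 d k t ts)
  show ?case
  proof (cases "k \<le> nleaves t")
    case True
    then show ?thesis using 4 attach_out(2)[of "k - nleaves t" ts d] by auto
  next
    case False
    then have "Suc 0 \<le> k - nleaves t \<and> k - nleaves t \<le> sum_list (map nleaves ts)" using 4(4) by auto
    then show ?thesis using 4 False attach_out(1)[of k t d] by auto
  qed
qed auto

lemma attach_dary:
  "dary d T \<Longrightarrow> dary d (attach d k T)"
  "(\<forall>t\<in>set ts. dary d t) \<Longrightarrow> length (attachs d k ts) = length ts \<and> (\<forall>t\<in>set (attachs d k ts). dary d t)"
  by (induction d k T and d k ts rule: attach_attachs.induct) auto

definition spl :: "'a list \<Rightarrow> nat \<Rightarrow> 'a list \<Rightarrow> 'a list" where
  "spl L k M = take (k - 1) L @ M @ drop k L"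

lemma attach_leaves:
  "leaves (attach d k T) = (if 1 \<le> k \<and> k \<le> nleaves T
      then spl (leaves T) k (map (\<lambda>a. leaves T ! (k - 1) @ [a]) [0..<d]) else leaves T)"
  "\<forall>i. leavess i (attachs d k ts) = (if 1 \<le> k \<and> k \<le> sum_list (map nleaves ts)
      then spl (leavess i ts) k (map (\<lambda>a. leavess i ts ! (k - 1) @ [a]) [0..<d]) else leavess i ts)"
proof (induction d k T and d k ts rule: attach_attachs.induct)
  case (1 d k)
  then show ?case
    by (auto simp: spl_def leavess_replicate_Leaf)
next
  case (4 d k t ts)
  show ?case
  proof
    fix i
    show "leavess i (attachs d k (t # ts)) = (if 1 \<le> k \<and> k \<le> sum_list (map nleaves (t # ts))
      then spl (leavess i (t # ts)) k (map (\<lambda>a. leavess i (t # ts) ! (k - 1) @ [a]) [0..<d]) else leavess i (t # ts))"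
    proof (cases "k = 0 \<or> sum_list (map nleaves (t#ts)) < k")
      case True
      then show ?thesis using attach_out(2)[of k "t#ts" d] by auto
    next
      case out: False
      show ?thesis
      proof (cases "k \<le> nleaves t")
        case True
        have r: "attachs d (k - nleaves t) ts = ts" using True attach_out(2) by simp
        have lt: "k - 1 < length (leaves t)" using True out by (simp add: length_leaves)
        show ?thesis using True out 4(1) r lt
          by (simp add: spl_def length_leaves nth_append take_map drop_map)
      next
        case False
        have r: "attach d k t = t" using False attach_out(1) by simp
        have lt: "\<not> k - 1 < length (leaves t)" "k - 1 - length (leaves t) = k - nleaves t - 1"
          using False out by (auto simp: length_leaves)
        show ?thesis using False out 4(2)[rule_format, of "Suc i"] r lt
          by (auto simp: spl_def length_leaves nth_append)
      qed
    qed
  qed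
qed (auto simp: spl_def)


definition conc :: "nat list \<Rightarrow> (nat \<Rightarrow> nat) \<Rightarrow> nat \<Rightarrow> nat" where
  "conc p x = (\<lambda>i. if i < length p then p ! i else x (i - length p))"

definition sdrop :: "nat \<Rightarrow> (nat \<Rightarrow> nat) \<Rightarrow> nat \<Rightarrow> nat" where
  "sdrop n x = (\<lambda>i. x (i + n))"

definition pref :: "nat list \<Rightarrow> (nat \<Rightarrow> nat) \<Rightarrow> bool" where
  "pref p x \<longleftrightarrow> (\<forall>i<length p. x i = p ! i)"

definition Xs :: "nat \<Rightarrow> (nat \<Rightarrow> nat) set" where
  "Xs d = {x. \<forall>i. x i < d}"

lemma conc_Nil[simp]: "conc [] x = x"
  by (simp add: conc_def)

lemma conc_append: "conc (p @ q) x = conc p (conc q x)"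
  by (auto simp: conc_def nth_append fun_eq_iff)

lemma pref_conc[simp]: "pref p (conc p y)"
  by (simp add: pref_def conc_def)

lemma sdrop_conc[simp]: "sdrop (length p) (conc p y) = y"
  by (simp add: sdrop_def conc_def)

lemma pref_conc_eq: "pref p x \<Longrightarrow> conc p (sdrop (length p) x) = x"
  by (auto simp: pref_def conc_def sdrop_def fun_eq_iff)

lemma conc_Xs: "(\<forall>a\<in>set p. a < d) \<Longrightarrow> y \<in> Xs d \<Longrightarrow> conc p y \<in> Xs d"
  by (auto simp: Xs_def conc_def)

lemma sdrop_Xs: "x \<in> Xs d \<Longrightarrow> sdrop n x \<in> Xs d"
  by (auto simp: Xs_def sdrop_def)

lemma pref_append: "pref (p @ q) x \<Longrightarrow> pref p x"
  by (auto simp: pref_def nth_append)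

lemma pref_comparable:
  assumes "pref p x" "pref q x" shows "prefix p q \<or> prefix q p"
proof -
  have *: "prefix p q" if "pref p x" "pref q x" "length p \<le> length q" for p q
  proof -
    have "p = take (length p) q"
      using that by (auto simp: pref_def intro!: nth_equalityI)
    then show ?thesis by (metis take_is_prefix)
  qed
  show ?thesis using *[OF assms] *[OF assms(2,1)] by linarith
qed

definition lv :: "tree \<Rightarrow> nat \<Rightarrow> nat list" where
  "lv T k = leaves T ! (k - 1)"

lemma lv_in: "1 \<le> k \<Longrightarrow> k \<le> nleaves T \<Longrightarrow> lv T k \<in> set (leaves T)"
  by (simp add: lv_def length_leaves)

lemma lv_letters: "dary d T \<Longrightarrow> 1 \<le> k \<Longrightarrow> k \<le> nleaves T \<Longrightarrow> \<forall>a\<in>set (lv T k). a < d"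
  using leaves_letters lv_in by blast

lemma lv_inj: "1 \<le> j \<Longrightarrow> j \<le> nleaves T \<Longrightarrow> 1 \<le> k \<Longrightarrow> k \<le> nleaves T \<Longrightarrow> lv T j = lv T k \<Longrightarrow> j = k"
  using distinct_leaves(1)[of T] nth_eq_iff_index_eq[of "leaves T" "j - 1" "k - 1"]
  by (simp add: lv_def length_leaves) arith

lemma leaves_cover:
  "dary d T \<Longrightarrow> x \<in> Xs d \<Longrightarrow> \<exists>p\<in>set (leaves T). pref p x"
proof (induction T arbitrary: x)
  case Leaf then show ?case by (simp add: pref_def)
next
  case (Node ts)
  let ?i = "x 0"
  have i: "?i < length ts" using Node.prems by (auto simp: Xs_def)
  then have t: "ts ! ?i \<in> set ts" by simp
  obtain p where p: "p \<in> set (leaves (ts ! ?i))" "pref p (sdrop 1 x)"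
    using Node.IH[OF t, of "sdrop 1 x"] Node.prems t sdrop_Xs by auto
  have "?i # p \<in> set (leaves (Node ts))" using i p set_leaves_Node by blast
  moreover have "pref (?i # p) x" using p(2)
    by (auto simp: pref_def sdrop_def less_Suc_eq_0_disj)
  ultimately show ?case by blast
qed

lemma lv_cover:
  assumes "dary d U" "x \<in> Xs d"
  shows "\<exists>k y. 1 \<le> k \<and> k \<le> nleaves U \<and> y \<in> Xs d \<and> x = conc (lv U k) y"
proof -
  obtain p where p: "p \<in> set (leaves U)" "pref p x" using leaves_cover[OF assms] by blast
  then obtain j where j: "j < length (leaves U)" "leaves U ! j = p" by (metis in_set_conv_nth)
  have "lv U (Suc j) = p" using j by (simp add: lv_def)
  then show ?thesis using j p(2) pref_conc_eq[OF p(2)] sdrop_Xs[OF assms(2)]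
    by (metis Suc_leI le_add1 length_leaves(1) plus_1_eq_Suc)
qed

lemma lv_unique:
  assumes "1 \<le> j" "j \<le> nleaves U" "1 \<le> k" "k \<le> nleaves U" "pref (lv U j) x" "pref (lv U k) x"
  shows "j = k"
proof -
  have "prefix (lv U j) (lv U k) \<or> prefix (lv U k) (lv U j)"
    using pref_comparable assms(5,6) by blast
  then have "lv U j = lv U k"
    using leaves_prefix_free lv_in assms(1-4) by metis
  then show ?thesis using lv_inj assms(1-4) by blast
qed

definition sem :: "triple \<Rightarrow> (nat \<Rightarrow> nat) \<Rightarrow> nat \<Rightarrow> nat" where
  "sem r x = (case r of (T, \<sigma>, U) \<Rightarrow>
     (if \<exists>k. 1 \<le> k \<and> k \<le> nleaves U \<and> pref (lv U k) x
      then (let k = (THE k. 1 \<le> k \<and> k \<le> nleaves U \<and> pref (lv U k) x)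
            in conc (lv T (\<sigma> k)) (sdrop (length (lv U k)) x))
      else x))"

lemma sem_leaf:
  assumes "1 \<le> k" "k \<le> nleaves U"
  shows "sem (T, \<sigma>, U) (conc (lv U k) y) = conc (lv T (\<sigma> k)) y"
proof -
  let ?x = "conc (lv U k) y"
  have th: "(THE k. 1 \<le> k \<and> k \<le> nleaves U \<and> pref (lv U k) ?x) = k"
    using assms lv_unique[of _ U k ?x] by (intro the_equality) auto
  show ?thesis unfolding sem_def using assms th by auto
qed

lemma valid_iff: "(T, \<sigma>, U) \<in> valid d \<longleftrightarrow> dary d T \<and> dary d U \<and> nleaves T = nleaves U \<and> \<sigma> permutes {1..nleaves U}"
  by (simp add: valid_def)

lemma perm_range: "\<sigma> permutes {1..n} \<Longrightarrow> 1 \<le> k \<Longrightarrow> k \<le> n \<Longrightarrow> 1 \<le> \<sigma> k \<and> \<sigma> k \<le> n"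
  using permutes_in_image[of \<sigma> "{1..n}" k] by auto

lemma sem_Xs:
  assumes "(T, \<sigma>, U) \<in> valid d" "x \<in> Xs d"
  shows "sem (T, \<sigma>, U) x \<in> Xs d"
proof -
  have v: "dary d T" "dary d U" "nleaves T = nleaves U" "\<sigma> permutes {1..nleaves U}"
    using assms(1) by (auto simp: valid_iff)
  obtain k y where k: "1 \<le> k" "k \<le> nleaves U" "y \<in> Xs d" "x = conc (lv U k) y"
    using lv_cover[OF v(2) assms(2)] by blast
  have "1 \<le> \<sigma> k" "\<sigma> k \<le> nleaves T" using perm_range[OF v(4) k(1,2)] v(3) by auto
  then show ?thesis using k sem_leaf[OF k(1,2)] conc_Xs lv_letters[OF v(1)] by metis
qed


lemma dec1:
  assumes "d \<ge> 1" "1 \<le> k" "k \<le> n" "1 \<le> i" "i \<le> n + d - 1"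
  shows "bstart d k (blk d k i) + boff d k i = i" "1 \<le> blk d k i" "blk d k i \<le> n"
    "boff d k i < d" "blk d k i \<noteq> k \<Longrightarrow> boff d k i = 0"
  using assms by (auto simp: bstart_def blk_def boff_def)

lemma dec2:
  assumes "d \<ge> 1" "1 \<le> m" "m \<le> n" "1 \<le> j" "j \<le> n" "ofs < d" "j \<noteq> m \<Longrightarrow> ofs = 0"
  shows "blk d m (bstart d m j + ofs) = j" "boff d m (bstart d m j + ofs) = ofs"
    "1 \<le> bstart d m j + ofs" "bstart d m j + ofs \<le> n + d - 1"
  using assms by (auto simp: bstart_def blk_def boff_def)

lemma sigma_ext_permutes:
  assumes "d \<ge> 1" "\<sigma> permutes {1..n}" "1 \<le> k" "k \<le> n"
  shows "sigma_ext d n \<sigma> k permutes {1..n + d - 1}"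
proof -
  define s where "s = sigma_ext d n \<sigma> k"
  define S where "S = {1..n + d - 1}"
  have sk: "1 \<le> \<sigma> k" "\<sigma> k \<le> n" using perm_range[OF assms(2,3,4)] by auto
  have img: "s i \<in> S \<and> blk d (\<sigma> k) (s i) = \<sigma> (blk d k i) \<and> boff d (\<sigma> k) (s i) = boff d k i"
    if i: "i \<in> S" for i
  proof -
    have i': "1 \<le> i" "i \<le> n + d - 1" using i by (auto simp: S_def)
    note b = dec1[OF assms(1,3,4) i']
    have sb: "1 \<le> \<sigma> (blk d k i)" "\<sigma> (blk d k i) \<le> n" using perm_range[OF assms(2) b(2,3)] by auto
    have ne: "\<sigma> (blk d k i) \<noteq> \<sigma> k \<Longrightarrow> boff d k i = 0" using b(5) by (cases "blk d k i = k") simp_all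
    have e: "s i = bstart d (\<sigma> k) (\<sigma> (blk d k i)) + boff d k i" using i by (simp add: sigma_ext_def s_def S_def)
    note c = dec2[OF assms(1) sk sb b(4) ne]
    show ?thesis unfolding e S_def using c by simp
  qed
  have inj: "inj_on s S"
  proof
    fix i i' assume ii: "i \<in> S" "i' \<in> S" "s i = s i'"
    then have "\<sigma> (blk d k i) = \<sigma> (blk d k i')" "boff d k i = boff d k i'"
      using img[OF ii(1)] img[OF ii(2)] by metis+
    then have "blk d k i = blk d k i'" "boff d k i = boff d k i'"
      using permutes_inj[OF assms(2)] by (simp_all add: inj_eq)
    moreover have "1 \<le> i" "i \<le> n + d - 1" "1 \<le> i'" "i' \<le> n + d - 1" using ii by (auto simp: S_def)
    ultimately show "i = i'" using dec1(1)[OF assms(1,3,4), of i] dec1(1)[OF assms(1,3,4), of i'] by metis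
  qed
  have sub: "s ` S \<subseteq> S" using img by blast
  have "s ` S = S" by (rule endo_inj_surj[OF _ sub inj]) (simp add: S_def)
  then have "bij_betw s S S" using inj by (simp add: bij_betw_def)
  moreover have "\<And>x. x \<notin> S \<Longrightarrow> s x = x" unfolding sigma_ext_def s_def S_def by presburger
  ultimately show ?thesis unfolding s_def S_def by (rule bij_imp_permutes)
qed

lemma sigma_ext_other:
  assumes "d \<ge> 1" "\<sigma> permutes {1..n}" "1 \<le> k" "k \<le> n" "1 \<le> j" "j \<le> n" "j \<noteq> k"
  shows "sigma_ext d n \<sigma> k (bstart d k j) = bstart d (\<sigma> k) (\<sigma> j)"
proof -
  have "blk d k (bstart d k j + 0) = j" "boff d k (bstart d k j + 0) = 0"
       "1 \<le> bstart d k j + 0" "bstart d k j + 0 \<le> n + d - 1"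
    using dec2[OF assms(1,3,4,5,6), of 0] assms by auto
  then show ?thesis by (simp add: sigma_ext_def)
qed

lemma sigma_ext_same:
  assumes "d \<ge> 1" "1 \<le> k" "k \<le> n" "i < d"
  shows "sigma_ext d n \<sigma> k (k + i) = \<sigma> k + i"
  using assms by (auto simp: sigma_ext_def bstart_def blk_def boff_def)

lemma spl_nth1: "i < k - 1 \<Longrightarrow> k \<le> length L \<Longrightarrow> spl L k M ! i = L ! i"
  by (simp add: spl_def nth_append)

lemma spl_nth2: "1 \<le> k \<Longrightarrow> k \<le> length L \<Longrightarrow> i < length M \<Longrightarrow> spl L k M ! (k - 1 + i) = M ! i"
proof -
  assume a: "1 \<le> k" "k \<le> length L" "i < length M"
  have l: "length (take (k - 1) L) = k - 1" using a by simp
  have "spl L k M ! (k - 1 + i) = (M @ drop k L) ! i"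
    unfolding spl_def using l nth_append_length_plus by metis
  also have "\<dots> = M ! i" using a by (simp add: nth_append)
  finally show ?thesis .
qed

lemma spl_nth3: "1 \<le> k \<Longrightarrow> k \<le> i \<Longrightarrow> i < length L \<Longrightarrow> spl L k M ! (k - 1 + length M + (i - k)) = L ! i"
proof -
  assume a: "1 \<le> k" "k \<le> i" "i < length L"
  have l: "length (take (k - 1) L) = k - 1" using a by simp
  have "spl L k M ! (k - 1 + length M + (i - k)) = (M @ drop k L) ! (length M + (i - k))"
    unfolding spl_def using l nth_append_length_plus by (metis add.assoc)
  also have "\<dots> = drop k L ! (i - k)" by simp
  also have "\<dots> = L ! i" using a by simp
  finally show ?thesis .
qed

lemma lv_attach_other:
  assumes "d \<ge> 1" "1 \<le> m" "m \<le> nleaves U" "1 \<le> j" "j \<le> nleaves U" "j \<noteq> m"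
  shows "lv (attach d m U) (bstart d m j) = lv U j"
proof -
  have L: "leaves (attach d m U) = spl (leaves U) m (map (\<lambda>a. leaves U ! (m - 1) @ [a]) [0..<d])"
    using attach_leaves(1) assms by simp
  have len: "length (leaves U) = nleaves U" by (simp add: length_leaves)
  show ?thesis
  proof (cases "j < m")
    case True
    then have "j - 1 < m - 1" using assms by linarith
    then show ?thesis using assms len True spl_nth1[of "j - 1" m "leaves U"]
      by (simp add: lv_def L bstart_def)
  next
    case False
    then have jm: "j > m" using assms by auto
    have "bstart d m j - 1 = m - 1 + length (map (\<lambda>a. leaves U ! (m - 1) @ [a]) [0..<d]) + (j - 1 - m)"
      using jm assms by (simp add: bstart_def)
    moreover have "m \<le> j - 1" "j - 1 < length (leaves U)" using jm assms len by auto
    ultimately show ?thesis using assms spl_nth3[of m "j - 1" "leaves U" "map (\<lambda>a. leaves U ! (m - 1) @ [a]) [0..<d]"]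
      unfolding lv_def L by simp
  qed
qed

lemma lv_attach_same:
  assumes "1 \<le> m" "m \<le> nleaves U" "i < d"
  shows "lv (attach d m U) (m + i) = lv U m @ [i]"
proof -
  have L: "leaves (attach d m U) = spl (leaves U) m (map (\<lambda>a. leaves U ! (m - 1) @ [a]) [0..<d])"
    using attach_leaves(1) assms by simp
  have len: "length (leaves U) = nleaves U" by (simp add: length_leaves)
  have "m + i - 1 = m - 1 + i" using assms by simp
  then show ?thesis using assms len spl_nth2[of m "leaves U" i]
    by (simp add: lv_def L)
qed

lemma expand_valid:
  assumes "d \<ge> 1" "(T, \<sigma>, U) \<in> valid d" "1 \<le> k" "k \<le> nleaves U"
  shows "(attach d (\<sigma> k) T, sigma_ext d (nleaves U) \<sigma> k, attach d k U) \<in> valid d"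
proof -
  have v: "dary d T" "dary d U" "nleaves T = nleaves U" "\<sigma> permutes {1..nleaves U}"
    using assms(2) by (auto simp: valid_iff)
  have sk: "1 \<le> \<sigma> k" "\<sigma> k \<le> nleaves T" using perm_range[OF v(4) assms(3,4)] v(3) by auto
  show ?thesis unfolding valid_iff
    using attach_dary(1)[OF v(1)] attach_dary(1)[OF v(2)] attach_nleaves(1)[OF assms(1)] sk assms v
      sigma_ext_permutes[OF assms(1) v(4) assms(3,4)]
    by auto
qed

lemma expand_sem:
  assumes "d \<ge> 1" "(T, \<sigma>, U) \<in> valid d" "1 \<le> k" "k \<le> nleaves U" "x \<in> Xs d"
  shows "sem (attach d (\<sigma> k) T, sigma_ext d (nleaves U) \<sigma> k, attach d k U) x = sem (T, \<sigma>, U) x"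
proof -
  have v: "dary d T" "dary d U" "nleaves T = nleaves U" "\<sigma> permutes {1..nleaves U}"
    using assms(2) by (auto simp: valid_iff)
  let ?n = "nleaves U"
  have sk: "1 \<le> \<sigma> k" "\<sigma> k \<le> nleaves T" using perm_range[OF v(4) assms(3,4)] v(3) by auto
  have nU: "nleaves (attach d k U) = ?n + (d - 1)" using attach_nleaves(1)[OF assms(1)] assms by auto
  obtain j y where jy: "1 \<le> j" "j \<le> ?n" "y \<in> Xs d" "x = conc (lv U j) y"
    using lv_cover[OF v(2) assms(5)] by blast
  have sj: "1 \<le> \<sigma> j" "\<sigma> j \<le> nleaves T" using perm_range[OF v(4) jy(1,2)] v(3) by auto
  show ?thesis
  proof (cases "j = k")
    case False
    have sne: "\<sigma> j \<noteq> \<sigma> k" using False permutes_inj[OF v(4)] by (auto dest: injD)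
    have b: "1 \<le> bstart d k j" "bstart d k j \<le> nleaves (attach d k U)"
      using dec2(3,4)[OF assms(1,3,4) jy(1,2), of 0] False nU assms(1) by auto
    have "sem (attach d (\<sigma> k) T, sigma_ext d ?n \<sigma> k, attach d k U) x
        = sem (attach d (\<sigma> k) T, sigma_ext d ?n \<sigma> k, attach d k U) (conc (lv (attach d k U) (bstart d k j)) y)"
      using lv_attach_other[OF assms(1,3,4) jy(1,2) False] jy(4) by simp
    also have "\<dots> = conc (lv (attach d (\<sigma> k) T) (sigma_ext d ?n \<sigma> k (bstart d k j))) y"
      using sem_leaf[OF b] by simp
    also have "\<dots> = conc (lv (attach d (\<sigma> k) T) (bstart d (\<sigma> k) (\<sigma> j))) y"
      using sigma_ext_other[OF assms(1) v(4) assms(3,4) jy(1,2) False] by simp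
    also have "\<dots> = conc (lv T (\<sigma> j)) y"
      using lv_attach_other[OF assms(1) sk sj sne] by simp
    also have "\<dots> = sem (T, \<sigma>, U) x" using sem_leaf[OF jy(1,2)] jy(4) by simp
    finally show ?thesis .
  next
    case True
    let ?i = "y 0"
    have i: "?i < d" using jy(3) by (auto simp: Xs_def)
    have y: "y = conc [?i] (sdrop 1 y)"
      using pref_conc_eq[of "[?i]" y] by (simp add: pref_def)
    have b: "1 \<le> k + ?i" "k + ?i \<le> nleaves (attach d k U)" using assms(3,4) i nU by auto
    have x: "x = conc (lv (attach d k U) (k + ?i)) (sdrop 1 y)"
      using jy(4) True lv_attach_same[OF assms(3,4) i] y by (metis conc_append)
    have "sem (attach d (\<sigma> k) T, sigma_ext d ?n \<sigma> k, attach d k U) x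
        = conc (lv (attach d (\<sigma> k) T) (sigma_ext d ?n \<sigma> k (k + ?i))) (sdrop 1 y)"
      using sem_leaf[OF b] x by simp
    also have "\<dots> = conc (lv (attach d (\<sigma> k) T) (\<sigma> k + ?i)) (sdrop 1 y)"
      using sigma_ext_same[OF assms(1,3,4) i] by simp
    also have "\<dots> = conc (lv T (\<sigma> k) @ [?i]) (sdrop 1 y)"
      using lv_attach_same[OF sk i] by simp
    also have "\<dots> = conc (lv T (\<sigma> k)) y" using y by (metis conc_append)
    also have "\<dots> = sem (T, \<sigma>, U) x" using sem_leaf[OF jy(1,2)] jy(4) True by simp
    finally show ?thesis .
  qed
qed


definition semeq :: "nat \<Rightarrow> triple \<Rightarrow> triple \<Rightarrow> bool" where
  "semeq d r s \<longleftrightarrow> (\<forall>x\<in>Xs d. sem r x = sem s x)"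

lemma expand_props:
  assumes "d \<ge> 1" "(a, b) \<in> expand d"
  shows "a \<in> valid d \<and> b \<in> valid d \<and> semeq d a b"
  using assms expand_valid[OF assms(1)] expand_sem[OF assms(1)]
  unfolding expand_def semeq_def by auto

lemma E1_props:
  assumes "d \<ge> 1" "(a, b) \<in> expand d \<union> (expand d)\<inverse>"
  shows "a \<in> valid d \<and> b \<in> valid d \<and> semeq d a b"
proof -
  have "(a, b) \<in> expand d \<or> (b, a) \<in> expand d" using assms(2) by blast
  then show ?thesis
  proof
    assume "(a, b) \<in> expand d" then show ?thesis using expand_props[OF assms(1)] by blast
  next
    assume "(b, a) \<in> expand d" then show ?thesis using expand_props[OF assms(1), of b a]
      unfolding semeq_def by metis
  qed
qed

lemma E_props:
  assumes "d \<ge> 1" "(a, b) \<in> (expand d \<union> (expand d)\<inverse>)\<^sup>+"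
  shows "a \<in> valid d \<and> b \<in> valid d \<and> semeq d a b"
  using assms(2)
proof (induction rule: trancl_induct)
  case (base y)
  then show ?case using E1_props[OF assms(1)] by blast
next
  case (step y z)
  then have "y \<in> valid d \<and> z \<in> valid d \<and> semeq d y z"
    using E1_props[OF assms(1)] by blast
  then show ?case using step.IH unfolding semeq_def by metis
qed

lemma treq_sound:
  assumes "d \<ge> 1" "(a, b) \<in> treq d"
  shows "a \<in> valid d \<and> b \<in> valid d \<and> semeq d a b"
proof -
  have "(a, b) \<in> Id_on (valid d) \<or> (a, b) \<in> (expand d \<union> (expand d)\<inverse>)\<^sup>+"
    using assms(2) unfolding treq_def by blast
  then show ?thesis
  proof
    assume "(a, b) \<in> Id_on (valid d)" then show ?thesis by (auto simp: semeq_def)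
  next
    assume "(a, b) \<in> (expand d \<union> (expand d)\<inverse>)\<^sup>+" then show ?thesis using E_props[OF assms(1)] by blast
  qed
qed

lemma treq_refl: "a \<in> valid d \<Longrightarrow> (a, a) \<in> treq d"
  unfolding treq_def by (rule UnI1) (rule Id_onI)

lemma treq_sym: "(a, b) \<in> treq d \<Longrightarrow> (b, a) \<in> treq d"
proof -
  assume "(a, b) \<in> treq d"
  moreover have "sym ((expand d \<union> (expand d)\<inverse>)\<^sup>+)"
    by (rule sym_trancl) (auto simp: sym_def)
  ultimately show ?thesis unfolding treq_def by (auto dest: symD)
qed

lemma treq_trans: "(a, b) \<in> treq d \<Longrightarrow> (b, c) \<in> treq d \<Longrightarrow> (a, c) \<in> treq d"
  unfolding treq_def by (auto intro: trancl_trans)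

lemma treq_expand:
  assumes "(a, b) \<in> treq d" "(b, c) \<in> expand d"
  shows "(a, c) \<in> treq d"
proof -
  have "(b, c) \<in> treq d" using assms(2) unfolding treq_def by auto
  then show ?thesis using treq_trans assms(1) by blast
qed

inductive refines :: "nat \<Rightarrow> tree \<Rightarrow> tree \<Rightarrow> bool" for d where
  rrefl: "refines d U U"
| rstep: "refines d U U' \<Longrightarrow> 1 \<le> k \<Longrightarrow> k \<le> nleaves U' \<Longrightarrow> refines d U (attach d k U')"

lemma sigma_ext_id: "d \<ge> 1 \<Longrightarrow> 1 \<le> k \<Longrightarrow> k \<le> n \<Longrightarrow> sigma_ext d n id k = id"
  using dec1(1) by (auto simp: sigma_ext_def fun_eq_iff)

lemma refines_treq_aux:
  assumes "refines d U U'"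
  shows "d \<ge> 1 \<Longrightarrow> (T, \<sigma>, U) \<in> valid d \<Longrightarrow>
    \<exists>T' \<sigma>'. ((T, \<sigma>, U), (T', \<sigma>', U')) \<in> treq d \<and> (\<sigma> = id \<longrightarrow> \<sigma>' = id)"
  using assms
proof (induction rule: refines.induct)
  case rrefl
  then show ?case using treq_refl by blast
next
  case (rstep U0 U' k)
  then obtain T' \<sigma>' where t: "((T, \<sigma>, U0), (T', \<sigma>', U')) \<in> treq d" "\<sigma> = id \<longrightarrow> \<sigma>' = id" by blast
  have v: "(T', \<sigma>', U') \<in> valid d" using treq_sound[OF rstep.prems(1) t(1)] by blast
  have e: "((T', \<sigma>', U'), (attach d (\<sigma>' k) T', sigma_ext d (nleaves U') \<sigma>' k, attach d k U')) \<in> expand d"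
    unfolding expand_def using v rstep.hyps by blast
  show ?case using treq_expand[OF t(1) e] t(2) sigma_ext_id[OF rstep.prems(1) rstep.hyps(2,3)] by blast
qed

lemma refines_treq:
  assumes "d \<ge> 1" "refines d U U'" "(T, \<sigma>, U) \<in> valid d"
  shows "\<exists>T' \<sigma>'. ((T, \<sigma>, U), (T', \<sigma>', U')) \<in> treq d \<and> (\<sigma> = id \<longrightarrow> \<sigma>' = id)"
  using refines_treq_aux[OF assms(2,1,3)] .

lemma refines_trans: "refines d B C \<Longrightarrow> refines d A B \<Longrightarrow> refines d A C"
  by (induction rule: refines.induct) (auto intro: refines.intros)

lemma attachs_offset:
  "1 \<le> k \<Longrightarrow> k \<le> nleaves t \<Longrightarrow>
   attachs d (sum_list (map nleaves xs) + k) (xs @ t # ys) = xs @ attach d k t # ys"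
proof (induction xs)
  case Nil
  then show ?case using attach_out(2)[of 0 ys d] by simp
next
  case (Cons x xs)
  have "attach d (nleaves x + sum_list (map nleaves xs) + k) x = x"
    using Cons.prems attach_out(1) by simp
  then show ?case using Cons by (simp add: add.assoc)
qed

lemma refines_lift:
  assumes "refines d t t'"
  shows "refines d (Node (xs @ t # ys)) (Node (xs @ t' # ys))"
  using assms
proof (induction rule: refines.induct)
  case rrefl then show ?case by (rule refines.rrefl)
next
  case (rstep U0 U' k)
  have "attach d (sum_list (map nleaves xs) + k) (Node (xs @ U' # ys)) = Node (xs @ attach d k U' # ys)"
    using attachs_offset[OF rstep.hyps(2,3)] by simp
  moreover have "1 \<le> sum_list (map nleaves xs) + k" "sum_list (map nleaves xs) + k \<le> nleaves (Node (xs @ U' # ys))"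
    using rstep.hyps by auto
  ultimately show ?case using refines.rstep[OF rstep.IH] by metis
qed

lemma refines_lift_list:
  assumes "list_all2 (refines d) ts ts'"
  shows "refines d (Node (xs @ ts)) (Node (xs @ ts'))"
  using assms
proof (induction ts ts' arbitrary: xs rule: list_all2_induct)
  case Nil then show ?case by (rule refines.rrefl)
next
  case (Cons t ts t' ts')
  have 1: "refines d (Node (xs @ t # ts)) (Node (xs @ t' # ts))" by (rule refines_lift[OF Cons.hyps(1)])
  have 2: "refines d (Node ((xs @ [t']) @ ts)) (Node ((xs @ [t']) @ ts'))" by (rule Cons.IH)
  show ?case using refines_trans[OF _ 1] 2 by simp
qed

fun full :: "nat \<Rightarrow> nat \<Rightarrow> tree" where
  "full d 0 = Leaf"
| "full d (Suc m) = Node (replicate d (full d m))"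

fun depth :: "tree \<Rightarrow> nat" where
  "depth Leaf = 0"
| "depth (Node ts) = Suc (sum_list (map depth ts))"

lemma full_dary: "dary d (full d m)"
  by (induction m) auto

lemma refines_Leaf_full: "refines d Leaf (full d m)"
proof (induction m)
  case 0 then show ?case by (simp add: refines.rrefl)
next
  case (Suc m)
  have a: "refines d Leaf (Node (replicate d Leaf))"
    using refines.rstep[OF refines.rrefl, of 1 Leaf] by simp
  have "list_all2 (refines d) (replicate d Leaf) (replicate d (full d m))"
    using Suc by (simp add: list_all2_conv_all_nth)
  then have "refines d (Node (replicate d Leaf)) (Node (replicate d (full d m)))"
    using refines_lift_list[of d _ _ "[]"] by simp
  then show ?case using refines_trans a by simp
qed

lemma member_le_sum_list: "(x::nat) \<in> set xs \<Longrightarrow> x \<le> sum_list xs"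
  by (induction xs) auto

lemma refines_full:
  "dary d U \<Longrightarrow> depth U \<le> m \<Longrightarrow> refines d U (full d m)"
proof (induction U arbitrary: m)
  case Leaf then show ?case by (simp add: refines_Leaf_full)
next
  case (Node ts)
  obtain m' where m: "m = Suc m'" using Node.prems by (cases m) auto
  have "refines d t (full d m')" if "t \<in> set ts" for t
  proof -
    have "depth t \<le> sum_list (map depth ts)" using that member_le_sum_list by simp
    then show ?thesis using Node.IH[OF that] Node.prems that m by auto
  qed
  then have "list_all2 (refines d) ts (replicate d (full d m'))"
    using Node.prems by (auto simp: list_all2_conv_all_nth)
  then show ?case using refines_lift_list[of d _ _ "[]"] m by simp
qed

lemma word_eq:
  assumes "d \<ge> 2" "\<forall>y\<in>Xs d. conc p y = conc q y"
  shows "p = q"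
proof -
  have y0: "(\<lambda>_. 0) \<in> Xs d" and y1: "(\<lambda>_. 1) \<in> Xs d" using assms(1) by (auto simp: Xs_def)
  have nl: False if "length p < length q" "\<forall>y\<in>Xs d. conc p y = conc q y" for p q
  proof -
    let ?y = "if q ! length p = 0 then (\<lambda>_::nat. 1::nat) else (\<lambda>_. 0)"
    have "?y \<in> Xs d" using y0 y1 by simp
    then have "conc p ?y (length p) = conc q ?y (length p)" using that by simp
    then show False using that(1) by (auto simp: conc_def split: if_splits)
  qed
  have "length p = length q" using nl[of p q] nl[of q p] assms(2) by (metis linorder_neqE_nat)
  moreover have "p ! i = q ! i" if "i < length p" for i
  proof -
    have "conc p (\<lambda>_. 0) i = conc q (\<lambda>_. 0) i" using assms(2) y0 by simp
    then show ?thesis using that \<open>length p = length q\<close> by (simp add: conc_def)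
  qed
  ultimately show ?thesis by (simp add: nth_equalityI)
qed

lemma same_domain_eq:
  assumes d: "d \<ge> 2" and v: "(T, \<sigma>, U) \<in> valid d" "(T', \<sigma>', U) \<in> valid d"
    and s: "semeq d (T, \<sigma>, U) (T', \<sigma>', U)"
  shows "T = T' \<and> \<sigma> = \<sigma>'"
proof -
  have vv: "dary d T" "dary d U" "nleaves T = nleaves U" "\<sigma> permutes {1..nleaves U}"
           "dary d T'" "nleaves T' = nleaves U" "\<sigma>' permutes {1..nleaves U}"
    using v by (auto simp: valid_iff)
  let ?n = "nleaves U"
  have key: "lv T (\<sigma> k) = lv T' (\<sigma>' k)" if k: "1 \<le> k" "k \<le> ?n" for k
  proof -
    have "conc (lv T (\<sigma> k)) y = conc (lv T' (\<sigma>' k)) y" if y: "y \<in> Xs d" for y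
    proof -
      have "conc (lv U k) y \<in> Xs d" using conc_Xs[OF lv_letters[OF vv(2) k] y] .
      then have "sem (T, \<sigma>, U) (conc (lv U k) y) = sem (T', \<sigma>', U) (conc (lv U k) y)"
        using s by (simp add: semeq_def)
      then show ?thesis using sem_leaf[OF k] by metis
    qed
    then show ?thesis using word_eq[OF d] by blast
  qed
  have sub: "set (leaves A) \<subseteq> set (leaves B)"
    if "nleaves A = ?n" "nleaves B = ?n" "\<pi> permutes {1..?n}" "\<pi>' permutes {1..?n}"
       "\<And>k. 1 \<le> k \<Longrightarrow> k \<le> ?n \<Longrightarrow> lv A (\<pi> k) = lv B (\<pi>' k)" for A B \<pi> \<pi>'
  proof
    fix p assume "p \<in> set (leaves A)"
    then obtain j where j: "j < length (leaves A)" "leaves A ! j = p" by (metis in_set_conv_nth)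
    let ?k = "inv_into UNIV \<pi> (Suc j)"
    have jr: "Suc j \<in> {1..?n}" using j that(1) by (simp add: length_leaves)
    have kr: "?k \<in> {1..?n}" using permutes_in_image[OF permutes_inv[OF that(3)]] jr by simp
    have pk: "\<pi> ?k = Suc j" using permutes_inverses(1)[OF that(3)] by simp
    have "p = lv A (\<pi> ?k)" using pk j by (simp add: lv_def)
    also have "\<dots> = lv B (\<pi>' ?k)" using that(5) kr by simp
    finally show "p \<in> set (leaves B)"
      using lv_in perm_range[OF that(4)] kr that(2) by auto
  qed
  have "set (leaves T) = set (leaves T')"
    using sub[of T T' \<sigma> \<sigma>'] sub[of T' T \<sigma>' \<sigma>] key vv by (metis subset_antisym)
  then have TT: "T = T'" using leaves_determine vv by blast
  have "\<sigma> k = \<sigma>' k" for k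
  proof (cases "k \<in> {1..?n}")
    case True
    then have "1 \<le> \<sigma> k" "\<sigma> k \<le> nleaves T" "1 \<le> \<sigma>' k" "\<sigma>' k \<le> nleaves T"
      using perm_range[OF vv(4)] perm_range[OF vv(7)] vv(3) by auto
    then show ?thesis using lv_inj key True TT by auto
  next
    case False
    then show ?thesis using vv(4,7) by (simp add: permutes_def)
  qed
  then show ?thesis using TT by auto
qed

lemma treq_complete:
  assumes d: "d \<ge> 2" and v: "r \<in> valid d" "r' \<in> valid d" and s: "semeq d r r'"
  shows "(r, r') \<in> treq d"
proof -
  obtain T \<sigma> U where r: "r = (T, \<sigma>, U)" by (cases r) auto
  obtain T' \<sigma>' U' where r': "r' = (T', \<sigma>', U')" by (cases r') auto
  have dU: "dary d U" "dary d U'" using v r r' by (auto simp: valid_iff)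
  let ?m = "depth U + depth U'"
  have d1: "d \<ge> 1" using d by simp
  obtain T1 \<sigma>1 where t1: "(r, (T1, \<sigma>1, full d ?m)) \<in> treq d"
    using refines_treq[OF d1 refines_full[OF dU(1), of ?m]] v r by force
  obtain T2 \<sigma>2 where t2: "(r', (T2, \<sigma>2, full d ?m)) \<in> treq d"
    using refines_treq[OF d1 refines_full[OF dU(2), of ?m]] v r' by force
  have a1: "(T1, \<sigma>1, full d ?m) \<in> valid d" "semeq d r (T1, \<sigma>1, full d ?m)" using treq_sound[OF d1 t1] by auto
  have a2: "(T2, \<sigma>2, full d ?m) \<in> valid d" "semeq d r' (T2, \<sigma>2, full d ?m)" using treq_sound[OF d1 t2] by auto
  have "semeq d (T1, \<sigma>1, full d ?m) (T2, \<sigma>2, full d ?m)"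
    using a1(2) a2(2) s by (simp add: semeq_def)
  then have "T1 = T2 \<and> \<sigma>1 = \<sigma>2" using same_domain_eq[OF d a1(1) a2(1)] by blast
  then show ?thesis using t1 t2 treq_sym treq_trans by metis
qed

lemma treq_iff:
  assumes "d \<ge> 2"
  shows "(r, r') \<in> treq d \<longleftrightarrow> r \<in> valid d \<and> r' \<in> valid d \<and> semeq d r r'"
  using treq_sound[of d r r'] treq_complete[OF assms, of r r'] assms by auto


definition flip :: "triple \<Rightarrow> triple" where
  "flip r = (case r of (T, \<sigma>, U) \<Rightarrow> (U, inv_into UNIV \<sigma>, T))"

lemma flip_valid: "(T, \<sigma>, U) \<in> valid d \<Longrightarrow> flip (T, \<sigma>, U) \<in> valid d"
  using permutes_inv[of \<sigma> "{1..nleaves U}"] by (auto simp: flip_def valid_iff)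

lemma flip_flip: "(T, \<sigma>, U) \<in> valid d \<Longrightarrow> flip (flip (T, \<sigma>, U)) = (T, \<sigma>, U)"
  using permutes_inv_inv[of \<sigma> "{1..nleaves U}"] by (auto simp: flip_def valid_iff)

lemma sem_flip:
  assumes "(T, \<sigma>, U) \<in> valid d" "x \<in> Xs d"
  shows "sem (flip (T, \<sigma>, U)) (sem (T, \<sigma>, U) x) = x"
proof -
  have v: "dary d T" "dary d U" "nleaves T = nleaves U" "\<sigma> permutes {1..nleaves U}"
    using assms(1) by (auto simp: valid_iff)
  obtain k y where k: "1 \<le> k" "k \<le> nleaves U" "y \<in> Xs d" "x = conc (lv U k) y"
    using lv_cover[OF v(2) assms(2)] by blast
  have sk: "1 \<le> \<sigma> k" "\<sigma> k \<le> nleaves T" using perm_range[OF v(4) k(1,2)] v(3) by auto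
  have "sem (flip (T, \<sigma>, U)) (sem (T, \<sigma>, U) x) = sem (U, inv_into UNIV \<sigma>, T) (conc (lv T (\<sigma> k)) y)"
    using sem_leaf[OF k(1,2)] k(4) by (simp add: flip_def)
  also have "\<dots> = conc (lv U (inv_into UNIV \<sigma> (\<sigma> k))) y" using sem_leaf[OF sk] by simp
  also have "\<dots> = x" using permutes_inverses(2)[OF v(4)] k(4) by simp
  finally show ?thesis .
qed

lemma comp_valid:
  "(T, \<sigma>, U) \<in> valid d \<Longrightarrow> (U, \<tau>, W) \<in> valid d \<Longrightarrow> (T, \<sigma> \<circ> \<tau>, W) \<in> valid d"
  by (auto simp: valid_iff intro: permutes_compose)

lemma comp_sem:
  assumes "(T, \<sigma>, U) \<in> valid d" "(U, \<tau>, W) \<in> valid d" "x \<in> Xs d"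
  shows "sem (T, \<sigma> \<circ> \<tau>, W) x = sem (T, \<sigma>, U) (sem (U, \<tau>, W) x)"
proof -
  have v: "dary d W" "nleaves U = nleaves W" "\<tau> permutes {1..nleaves W}"
    using assms(2) by (auto simp: valid_iff)
  obtain k y where k: "1 \<le> k" "k \<le> nleaves W" "y \<in> Xs d" "x = conc (lv W k) y"
    using lv_cover[OF v(1) assms(3)] by blast
  have tk: "1 \<le> \<tau> k" "\<tau> k \<le> nleaves U" using perm_range[OF v(3) k(1,2)] v(2) by auto
  show ?thesis using sem_leaf[OF k(1,2)] sem_leaf[OF tk] k(4) by simp
qed

lemma sem_one: "sem (Leaf, id, Leaf) x = x"
  using sem_leaf[of 1 Leaf Leaf id x] by (simp add: lv_def)

lemma one_valid: "(Leaf, id, Leaf) \<in> valid d"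
  by (simp add: valid_iff permutes_id)

context
  fixes d :: nat
  assumes d2: "d \<ge> 2"
begin

lemma d1: "d \<ge> 1" using d2 by simp

lemma mem_cls: "r \<in> valid d \<Longrightarrow> s \<in> cls d r \<longleftrightarrow> s \<in> valid d \<and> semeq d r s"
  unfolding cls_def using treq_iff[OF d2] by auto

lemma self_cls: "r \<in> valid d \<Longrightarrow> r \<in> cls d r"
  using mem_cls by (simp add: semeq_def)

lemma cls_eq: "r \<in> valid d \<Longrightarrow> s \<in> valid d \<Longrightarrow> cls d r = cls d s \<longleftrightarrow> semeq d r s"
proof
  assume "r \<in> valid d" "s \<in> valid d" "cls d r = cls d s"
  then show "semeq d r s" using mem_cls self_cls by metis
next
  assume a: "r \<in> valid d" "s \<in> valid d" "semeq d r s"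
  show "cls d r = cls d s"
    using mem_cls[OF a(1)] mem_cls[OF a(2)] a(3) unfolding semeq_def by auto
qed

lemma carrier_V: "a \<in> carrier (V d) \<longleftrightarrow> (\<exists>r\<in>valid d. a = cls d r)"
  by (auto simp: V_def quotient_def cls_def)

lemma flip_sem_eq:
  assumes "r \<in> valid d" "s \<in> valid d" "semeq d (flip r) s"
  shows "semeq d r (flip s)"
proof -
  obtain T \<sigma> U where r: "r = (T, \<sigma>, U)" by (cases r) auto
  obtain T' \<sigma>' U' where s: "s = (T', \<sigma>', U')" by (cases s) auto
  show ?thesis unfolding semeq_def
  proof
    fix x assume x: "x \<in> Xs d"
    let ?y = "sem r x"
    have y: "?y \<in> Xs d" using sem_Xs assms(1) x r by simp
    have "sem (flip r) ?y = x" using sem_flip assms(1) x r by simp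
    then have "sem s ?y = x" using assms(3) y by (simp add: semeq_def)
    then have "sem (flip s) x = ?y" using sem_flip[of T' \<sigma>' U' d ?y] assms(2) s y by simp
    then show "sem r x = sem (flip s) x" by simp
  qed
qed

lemma middle:
  assumes "r \<in> valid d" "s \<in> valid d"
  shows "\<exists>T \<sigma> U \<tau> W. (T, \<sigma>, U) \<in> cls d r \<and> (U, \<tau>, W) \<in> cls d s
     \<and> ((\<exists>A B. r = (A, id, B)) \<longrightarrow> \<sigma> = id) \<and> ((\<exists>A B. s = (A, id, B)) \<longrightarrow> \<tau> = id)"
proof -
  obtain T0 \<sigma>0 U0 where r: "r = (T0, \<sigma>0, U0)" by (cases r) auto
  obtain U1 \<tau>1 W1 where s: "s = (U1, \<tau>1, W1)" by (cases s) auto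
  have dU: "dary d U0" "dary d U1" using assms r s by (auto simp: valid_iff)
  let ?m = "depth U0 + depth U1"
  obtain T \<sigma> where t1: "(r, (T, \<sigma>, full d ?m)) \<in> treq d" "\<sigma>0 = id \<longrightarrow> \<sigma> = id"
    using refines_treq[OF d1 refines_full[OF dU(1), of ?m]] assms r by force
  have fs: "flip s \<in> valid d" "flip s = (W1, inv_into UNIV \<tau>1, U1)" using flip_valid assms(2) s by (auto simp: flip_def)
  obtain W \<tau>' where t2: "(flip s, (W, \<tau>', full d ?m)) \<in> treq d" "inv_into UNIV \<tau>1 = id \<longrightarrow> \<tau>' = id"
    using refines_treq[OF d1 refines_full[OF dU(2), of ?m]] fs by force
  have v2: "(W, \<tau>', full d ?m) \<in> valid d" "semeq d (flip s) (W, \<tau>', full d ?m)"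
    using treq_sound[OF d1 t2(1)] by auto
  have "semeq d s (flip (W, \<tau>', full d ?m))"
    using flip_sem_eq[OF assms(2) v2(1) v2(2)] .
  moreover have "flip (W, \<tau>', full d ?m) = (full d ?m, inv_into UNIV \<tau>', W)" by (simp add: flip_def)
  moreover have "flip (W, \<tau>', full d ?m) \<in> valid d" using flip_valid v2(1) by blast
  ultimately have m2: "(full d ?m, inv_into UNIV \<tau>', W) \<in> cls d s" using mem_cls assms(2) by simp
  have m1: "(T, \<sigma>, full d ?m) \<in> cls d r" using t1(1) by (simp add: cls_def)
  have "\<tau>1 = id \<Longrightarrow> inv_into UNIV \<tau>' = id" using t2(2) by (simp add: inv_id)
  then show ?thesis using m1 m2 t1(2) r s by blast
qed

definition evl :: "triple set \<Rightarrow> (nat \<Rightarrow> nat) \<Rightarrow> nat \<Rightarrow> nat" where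
  "evl a x = sem (SOME r. r \<in> a) x"

lemma evl_cls: "r \<in> valid d \<Longrightarrow> x \<in> Xs d \<Longrightarrow> evl (cls d r) x = sem r x"
proof -
  assume a: "r \<in> valid d" "x \<in> Xs d"
  have "(SOME r'. r' \<in> cls d r) \<in> cls d r" using self_cls[OF a(1)] by (rule someI)
  then show ?thesis using mem_cls[OF a(1)] a(2) by (simp add: evl_def semeq_def)
qed

lemma vmult_cls:
  assumes "r \<in> valid d" "s \<in> valid d"
  shows "\<exists>t\<in>valid d. vmult d (cls d r) (cls d s) = cls d t \<and> (\<forall>x\<in>Xs d. sem t x = sem r (sem s x))
     \<and> ((\<exists>A B. r = (A, id, B)) \<longrightarrow> (\<exists>A B. s = (A, id, B)) \<longrightarrow> (\<exists>A B. t = (A, id, B)))"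
proof -
  obtain T \<sigma> U \<tau> W where m: "(T, \<sigma>, U) \<in> cls d r" "(U, \<tau>, W) \<in> cls d s"
     "(\<exists>A B. r = (A, id, B)) \<longrightarrow> \<sigma> = id" "(\<exists>A B. s = (A, id, B)) \<longrightarrow> \<tau> = id"
    using middle[OF assms] by blast
  have good: "t \<in> valid d \<and> (\<forall>x\<in>Xs d. sem t x = sem r (sem s x))"
    if tt: "(T', \<sigma>', U') \<in> cls d r" "(U', \<tau>', W') \<in> cls d s" "t = (T', \<sigma>' \<circ> \<tau>', W')" for T' \<sigma>' U' \<tau>' W' t
  proof -
    have v: "(T', \<sigma>', U') \<in> valid d" "semeq d r (T', \<sigma>', U')"
            "(U', \<tau>', W') \<in> valid d" "semeq d s (U', \<tau>', W')"
      using tt mem_cls assms by auto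
    have "sem t x = sem r (sem s x)" if x: "x \<in> Xs d" for x
    proof -
      have "sem s x \<in> Xs d" using v(3,4) sem_Xs x by (simp add: semeq_def)
      then show ?thesis using comp_sem[OF v(1,3) x] v(2,4) x tt(3) by (simp add: semeq_def)
    qed
    then show ?thesis using comp_valid[OF v(1,3)] tt(3) by simp
  qed
  let ?t = "(T, \<sigma> \<circ> \<tau>, W)"
  have gt: "?t \<in> valid d" "\<forall>x\<in>Xs d. sem ?t x = sem r (sem s x)" using good[OF m(1,2)] by auto
  have "vmult d (cls d r) (cls d s) = cls d ?t"
    unfolding vmult_def
  proof (rule the_equality)
    show "\<exists>T' \<sigma>' U' \<tau>' W'. (T', \<sigma>', U') \<in> cls d r \<and> (U', \<tau>', W') \<in> cls d s \<and> cls d ?t = cls d (T', \<sigma>' \<circ> \<tau>', W')"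
      using m by blast
  next
    fix c assume "\<exists>T' \<sigma>' U' \<tau>' W'. (T', \<sigma>', U') \<in> cls d r \<and> (U', \<tau>', W') \<in> cls d s \<and> c = cls d (T', \<sigma>' \<circ> \<tau>', W')"
    then obtain T' \<sigma>' U' \<tau>' W' where c: "(T', \<sigma>', U') \<in> cls d r" "(U', \<tau>', W') \<in> cls d s" "c = cls d (T', \<sigma>' \<circ> \<tau>', W')"
      by blast
    have g: "(T', \<sigma>' \<circ> \<tau>', W') \<in> valid d" "\<forall>x\<in>Xs d. sem (T', \<sigma>' \<circ> \<tau>', W') x = sem r (sem s x)"
      using good[OF c(1,2) refl] by auto
    show "c = cls d ?t" using c(3) cls_eq[OF g(1) gt(1)] g(2) gt(2) by (simp add: semeq_def)
  qed
  then show ?thesis using gt m(3,4) by auto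
qed

end


context
  fixes d :: nat
  assumes d2: "d \<ge> 2"
begin

lemma cls_carrier: "r \<in> valid d \<Longrightarrow> cls d r \<in> carrier (V d)"
  using carrier_V[OF d2] by blast

lemma mult_V: "a \<otimes>\<^bsub>V d\<^esub> b = vmult d a b"
  by (simp add: V_def)

lemma one_V: "\<one>\<^bsub>V d\<^esub> = cls d (Leaf, id, Leaf)"
  by (simp add: V_def)

lemma get_rep: "a \<in> carrier (V d) \<Longrightarrow> \<exists>r\<in>valid d. a = cls d r"
  using carrier_V[OF d2] by blast

lemma evl_Xs: "a \<in> carrier (V d) \<Longrightarrow> x \<in> Xs d \<Longrightarrow> evl a x \<in> Xs d"
proof -
  assume a: "a \<in> carrier (V d)" "x \<in> Xs d"
  obtain r where r: "r \<in> valid d" "a = cls d r" using get_rep[OF a(1)] by blast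
  obtain T \<sigma> U where "r = (T, \<sigma>, U)" by (cases r) auto
  then show ?thesis using evl_cls[OF d2 r(1) a(2)] sem_Xs r a(2) by simp
qed

lemma mult_evl:
  assumes "a \<in> carrier (V d)" "b \<in> carrier (V d)"
  shows "a \<otimes>\<^bsub>V d\<^esub> b \<in> carrier (V d) \<and> (\<forall>x\<in>Xs d. evl (a \<otimes>\<^bsub>V d\<^esub> b) x = evl a (evl b x))"
proof -
  obtain r where r: "r \<in> valid d" "a = cls d r" using get_rep[OF assms(1)] by blast
  obtain s where s: "s \<in> valid d" "b = cls d s" using get_rep[OF assms(2)] by blast
  obtain t where t: "t \<in> valid d" "vmult d (cls d r) (cls d s) = cls d t" "\<forall>x\<in>Xs d. sem t x = sem r (sem s x)"
    using vmult_cls[OF d2 r(1) s(1)] by blast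
  have "evl (a \<otimes>\<^bsub>V d\<^esub> b) x = evl a (evl b x)" if x: "x \<in> Xs d" for x
  proof -
    have "evl b x \<in> Xs d" using evl_Xs assms(2) x by blast
    then show ?thesis using evl_cls[OF d2] t r s x by (simp add: mult_V)
  qed
  then show ?thesis using t r s cls_carrier by (simp add: mult_V)
qed

lemma V_ext:
  assumes "a \<in> carrier (V d)" "b \<in> carrier (V d)" "\<forall>x\<in>Xs d. evl a x = evl b x"
  shows "a = b"
proof -
  obtain r where r: "r \<in> valid d" "a = cls d r" using get_rep[OF assms(1)] by blast
  obtain s where s: "s \<in> valid d" "b = cls d s" using get_rep[OF assms(2)] by blast
  have "semeq d r s" using assms(3) evl_cls[OF d2] r s by (simp add: semeq_def)
  then show ?thesis using cls_eq[OF d2 r(1) s(1)] r s by simp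
qed

lemma evl_one: "x \<in> Xs d \<Longrightarrow> evl \<one>\<^bsub>V d\<^esub> x = x"
  using evl_cls[OF d2 one_valid] sem_one by (simp add: one_V)

lemma one_carrier: "\<one>\<^bsub>V d\<^esub> \<in> carrier (V d)"
  using cls_carrier one_valid by (simp add: one_V)

lemma group_V: "group (V d)"
proof (rule groupI)
  show "x \<otimes>\<^bsub>V d\<^esub> y \<in> carrier (V d)" if "x \<in> carrier (V d)" "y \<in> carrier (V d)" for x y
    using mult_evl that by blast
  show "\<one>\<^bsub>V d\<^esub> \<in> carrier (V d)" by (rule one_carrier)
  show "x \<otimes>\<^bsub>V d\<^esub> y \<otimes>\<^bsub>V d\<^esub> z = x \<otimes>\<^bsub>V d\<^esub> (y \<otimes>\<^bsub>V d\<^esub> z)"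
    if "x \<in> carrier (V d)" "y \<in> carrier (V d)" "z \<in> carrier (V d)" for x y z
  proof (rule V_ext)
    show "x \<otimes>\<^bsub>V d\<^esub> y \<otimes>\<^bsub>V d\<^esub> z \<in> carrier (V d)" "x \<otimes>\<^bsub>V d\<^esub> (y \<otimes>\<^bsub>V d\<^esub> z) \<in> carrier (V d)"
      using mult_evl that by blast+
    show "\<forall>u\<in>Xs d. evl (x \<otimes>\<^bsub>V d\<^esub> y \<otimes>\<^bsub>V d\<^esub> z) u = evl (x \<otimes>\<^bsub>V d\<^esub> (y \<otimes>\<^bsub>V d\<^esub> z)) u"
    proof
      fix u assume u: "u \<in> Xs d"
      have xy: "x \<otimes>\<^bsub>V d\<^esub> y \<in> carrier (V d)" and yz: "y \<otimes>\<^bsub>V d\<^esub> z \<in> carrier (V d)" using mult_evl that by blast+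
      have zu: "evl z u \<in> Xs d" using evl_Xs that u by blast
      show "evl (x \<otimes>\<^bsub>V d\<^esub> y \<otimes>\<^bsub>V d\<^esub> z) u = evl (x \<otimes>\<^bsub>V d\<^esub> (y \<otimes>\<^bsub>V d\<^esub> z)) u"
        using mult_evl[OF xy that(3)] mult_evl[OF that(1) yz] mult_evl[OF that(1,2)] mult_evl[OF that(2,3)] u zu
        by simp
    qed
  qed
  show "\<one>\<^bsub>V d\<^esub> \<otimes>\<^bsub>V d\<^esub> x = x" if "x \<in> carrier (V d)" for x
    using V_ext mult_evl[OF one_carrier that] that one_carrier evl_one evl_Xs by simp
  show "\<exists>y\<in>carrier (V d). y \<otimes>\<^bsub>V d\<^esub> x = \<one>\<^bsub>V d\<^esub>" if x: "x \<in> carrier (V d)" for x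
  proof -
    obtain r where r: "r \<in> valid d" "x = cls d r" using get_rep[OF x] by blast
    obtain T \<sigma> U where rr: "r = (T, \<sigma>, U)" by (cases r) auto
    have fv: "flip r \<in> valid d" using flip_valid r rr by simp
    let ?y = "cls d (flip r)"
    have yc: "?y \<in> carrier (V d)" using cls_carrier fv by blast
    have "?y \<otimes>\<^bsub>V d\<^esub> x = \<one>\<^bsub>V d\<^esub>"
    proof (rule V_ext)
      show "?y \<otimes>\<^bsub>V d\<^esub> x \<in> carrier (V d)" using mult_evl yc x by blast
      show "\<one>\<^bsub>V d\<^esub> \<in> carrier (V d)" by (rule one_carrier)
      show "\<forall>u\<in>Xs d. evl (?y \<otimes>\<^bsub>V d\<^esub> x) u = evl \<one>\<^bsub>V d\<^esub> u"
      proof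
        fix u assume u: "u \<in> Xs d"
        have "sem r u \<in> Xs d" using sem_Xs r rr u by simp
        then have "evl (?y \<otimes>\<^bsub>V d\<^esub> x) u = sem (flip r) (sem r u)"
          using mult_evl[OF yc x] u evl_cls[OF d2] r fv by simp
        also have "\<dots> = u" using sem_flip r rr u by simp
        finally show "evl (?y \<otimes>\<^bsub>V d\<^esub> x) u = evl \<one>\<^bsub>V d\<^esub> u" using evl_one u by simp
      qed
    qed
    then show ?thesis using yc by blast
  qed
qed

lemma evl_inv:
  assumes "a \<in> carrier (V d)" "x \<in> Xs d"
  shows "evl (inv\<^bsub>V d\<^esub> a) (evl a x) = x" "evl a (evl (inv\<^bsub>V d\<^esub> a) x) = x"
    "inv\<^bsub>V d\<^esub> a \<in> carrier (V d)"
proof -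
  interpret G: group "V d" by (rule group_V)
  have ic: "inv\<^bsub>V d\<^esub> a \<in> carrier (V d)" using assms(1) by simp
  then show "inv\<^bsub>V d\<^esub> a \<in> carrier (V d)" .
  have "evl (inv\<^bsub>V d\<^esub> a \<otimes>\<^bsub>V d\<^esub> a) x = x" using assms evl_one by simp
  then show "evl (inv\<^bsub>V d\<^esub> a) (evl a x) = x" using mult_evl[OF ic assms(1)] assms(2) by simp
  have "evl (a \<otimes>\<^bsub>V d\<^esub> inv\<^bsub>V d\<^esub> a) x = x" using assms evl_one by simp
  then show "evl a (evl (inv\<^bsub>V d\<^esub> a) x) = x" using mult_evl[OF assms(1) ic] assms(2) by simp
qed

lemma F_mem: "(T, id, U) \<in> valid d \<Longrightarrow> cls d (T, id, U) \<in> F d"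
proof -
  assume v: "(T, id, U) \<in> valid d"
  have "(T, id, U) \<in> cls d (T, id, U)" using self_cls[OF d2 v] .
  then show ?thesis using cls_carrier[OF v] unfolding F_def by blast
qed

end


fun path :: "nat \<Rightarrow> nat list \<Rightarrow> tree \<Rightarrow> tree" where
  "path d [] S = S"
| "path d (a # q) S = Node (map (\<lambda>j. if j = a then path d q S else Leaf) [0..<d])"

fun Pre :: "nat list \<Rightarrow> nat list list" where
  "Pre [] = []"
| "Pre (a # q) = map (\<lambda>j. [j]) [0..<a] @ map (Cons a) (Pre q)"

fun Post :: "nat \<Rightarrow> nat list \<Rightarrow> nat list list" where
  "Post d [] = []"
| "Post d (a # q) = map (Cons a) (Post d q) @ map (\<lambda>j. [j]) [Suc a..<d]"

lemma leavess_map_upt: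
  "leavess i (map g [i..<i+m]) = concat (map (\<lambda>j. map (Cons j) (leaves (g j))) [i..<i+m])"
proof (induction m arbitrary: i)
  case 0 then show ?case by simp
next
  case (Suc m)
  have "[i..<i + Suc m] = i # [Suc i..<Suc i + m]" by (simp add: upt_rec)
  then show ?case using Suc[of "Suc i"] by simp
qed

lemma path_leaves:
  "(\<forall>a\<in>set q. a < d) \<Longrightarrow> leaves (path d q S) = Pre q @ map (\<lambda>p. q @ p) (leaves S) @ Post d q"
proof (induction q)
  case Nil then show ?case by simp
next
  case (Cons a q)
  let ?g = "\<lambda>j. if j = a then path d q S else Leaf"
  have a: "a < d" using Cons.prems by simp
  have split: "[0..<d] = [0..<a] @ a # [Suc a..<d]"
  proof -
    have "[0..<d] = [0..<a] @ [a..<a + (d - a)]" using upt_add_eq_append[of 0 a "d - a"] a by simp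
    then show ?thesis using upt_conv_Cons[of a d] a by simp
  qed
  have "leaves (path d (a # q) S) = concat (map (\<lambda>j. map (Cons j) (leaves (?g j))) [0..<d])"
    using leavess_map_upt[of 0 ?g d] by simp
  also have "\<dots> = concat (map (\<lambda>j. map (Cons j) (leaves (?g j))) [0..<a])
      @ map (Cons a) (leaves (path d q S))
      @ concat (map (\<lambda>j. map (Cons j) (leaves (?g j))) [Suc a..<d])"
    by (subst split) simp
  also have "concat (map (\<lambda>j. map (Cons j) (leaves (?g j))) [0..<a]) = map (\<lambda>j. [j]) [0..<a]"
  proof -
    have "map (\<lambda>j. map (Cons j) (leaves (?g j))) [0..<a] = map (\<lambda>j. [[j]]) [0..<a]"
      by (rule map_cong) auto
    then show ?thesis by (metis concat_map_singleton)
  qed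
  also have "concat (map (\<lambda>j. map (Cons j) (leaves (?g j))) [Suc a..<d]) = map (\<lambda>j. [j]) [Suc a..<d]"
  proof -
    have "map (\<lambda>j. map (Cons j) (leaves (?g j))) [Suc a..<d] = map (\<lambda>j. [[j]]) [Suc a..<d]"
      by (rule map_cong) auto
    then show ?thesis by (metis concat_map_singleton)
  qed
  finally show ?case using Cons by simp
qed

lemma path_dary: "(\<forall>a\<in>set q. a < d) \<Longrightarrow> dary d S \<Longrightarrow> dary d (path d q S)"
  by (induction q) auto

lemma path_nleaves: "(\<forall>a\<in>set q. a < d) \<Longrightarrow> nleaves (path d q S) = length (Pre q) + nleaves S + length (Post d q)"
  using path_leaves[of q d S] length_leaves(1)[of "path d q S"] length_leaves(1)[of S] by simp

lemma path_valid:
  assumes "\<forall>a\<in>set q. a < d" "dary d A" "dary d B" "nleaves A = nleaves B"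
  shows "(path d q A, id, path d q B) \<in> valid d"
  using assms path_dary path_nleaves by (simp add: valid_iff permutes_id)

lemma lv_path_mid:
  assumes "\<forall>a\<in>set q. a < d" "1 \<le> i" "i \<le> nleaves S"
  shows "lv (path d q S) (length (Pre q) + i) = q @ lv S i"
proof -
  have "length (Pre q) + i - 1 = length (Pre q) + (i - 1)" using assms by simp
  moreover have "i - 1 < length (leaves S)" using assms by (simp add: length_leaves)
  ultimately show ?thesis using path_leaves[OF assms(1)]
    by (simp add: lv_def nth_append)
qed

lemma nth_append3: "length xs1 + length ys1 \<le> i \<Longrightarrow> (xs1 @ ys1 @ zs1) ! i = zs1 ! (i - length xs1 - length ys1)"
proof -
  assume a: "length xs1 + length ys1 \<le> i"
  define k where "k = i - length xs1 - length ys1"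
  have i: "i = length xs1 + (length ys1 + k)" using a k_def by simp
  show ?thesis unfolding i by (simp only: nth_append_length_plus append_assoc) (simp add: k_def)
qed

lemma lv_path_other:
  assumes "\<forall>a\<in>set q. a < d" "nleaves A = nleaves B" "1 \<le> j"
    "j \<le> length (Pre q) \<or> length (Pre q) + nleaves B < j"
  shows "lv (path d q A) j = lv (path d q B) j \<and> \<not> prefix q (lv (path d q B) j) \<or> j > nleaves (path d q B)"
proof (cases "j \<le> length (Pre q)")
  case True
  have "j - 1 < length (Pre q)" using True assms(3) by simp
  moreover have "\<not> prefix q p" if "p \<in> set (Pre q)" for p
    using that by (induction q arbitrary: p) auto
  ultimately show ?thesis using path_leaves[OF assms(1)]
    by (simp add: lv_def nth_append)
next
  case False
  then have j: "length (Pre q) + nleaves B < j" using assms(4) by simp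
  show ?thesis
  proof (cases "j \<le> nleaves (path d q B)")
    case True
    let ?i = "j - 1 - length (Pre q) - nleaves B"
    have LA: "length (map (\<lambda>p. q @ p) (leaves A)) = nleaves B" using assms(2) by (simp add: length_leaves)
    have LB: "length (map (\<lambda>p. q @ p) (leaves B)) = nleaves B" by (simp add: length_leaves)
    have i: "?i < length (Post d q)" using True j path_nleaves[OF assms(1)] by simp
    have eA: "lv (path d q A) j = Post d q ! ?i"
      using path_leaves[OF assms(1), of A] j LA nth_append3[of "Pre q" "map (\<lambda>p. q @ p) (leaves A)" "j - 1" "Post d q"]
      by (simp add: lv_def)
    have eB: "lv (path d q B) j = Post d q ! ?i"
      using path_leaves[OF assms(1), of B] j LB nth_append3[of "Pre q" "map (\<lambda>p. q @ p) (leaves B)" "j - 1" "Post d q"]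
      by (simp add: lv_def)
    have "\<not> prefix q p" if "p \<in> set (Post d q)" for p
      using that by (induction q arbitrary: p) auto
    then show ?thesis using eA eB i by simp
  qed simp
qed


lemma path_sem_out:
  assumes q: "\<forall>a\<in>set q. a < d" and A: "dary d A" and B: "dary d B" and n: "nleaves A = nleaves B"
    and x: "x \<in> Xs d" "\<not> pref q x"
  shows "sem (path d q A, id, path d q B) x = x"
proof -
  have dB: "dary d (path d q B)" using path_dary q B by blast
  obtain j y where j: "1 \<le> j" "j \<le> nleaves (path d q B)" "y \<in> Xs d" "x = conc (lv (path d q B) j) y"
    using lv_cover[OF dB x(1)] by blast
  have notmid: "\<not> (length (Pre q) < j \<and> j \<le> length (Pre q) + nleaves B)"
  proof
    assume m: "length (Pre q) < j \<and> j \<le> length (Pre q) + nleaves B"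
    define i where "i = j - length (Pre q)"
    have i: "1 \<le> i" "i \<le> nleaves B" "j = length (Pre q) + i" using m by (auto simp: i_def)
    have "lv (path d q B) j = q @ lv B i" using lv_path_mid[OF q i(1,2)] i(3) by simp
    then have "pref q x" using j(4) by (metis conc_append pref_conc)
    then show False using x(2) by simp
  qed
  then have "j \<le> length (Pre q) \<or> length (Pre q) + nleaves B < j" by auto
  then have e: "lv (path d q A) j = lv (path d q B) j"
    using lv_path_other[OF q n j(1)] j(2) by auto
  show ?thesis using sem_leaf[OF j(1,2)] j(4) e by simp
qed

lemma path_sem_in:
  assumes q: "\<forall>a\<in>set q. a < d" and A: "dary d A" and B: "dary d B" and n: "nleaves A = nleaves B"
    and z: "z \<in> Xs d"
  shows "sem (path d q A, id, path d q B) (conc q z) = conc q (sem (A, id, B) z)"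
proof -
  obtain i y where i: "1 \<le> i" "i \<le> nleaves B" "y \<in> Xs d" "z = conc (lv B i) y"
    using lv_cover[OF B z] by blast
  have r: "1 \<le> length (Pre q) + i" "length (Pre q) + i \<le> nleaves (path d q B)"
    using i path_nleaves[OF q] by auto
  have "conc q z = conc (lv (path d q B) (length (Pre q) + i)) y"
    using lv_path_mid[OF q i(1,2)] i(4) by (simp add: conc_append)
  then have "sem (path d q A, id, path d q B) (conc q z) = conc (lv (path d q A) (length (Pre q) + i)) y"
    using sem_leaf[OF r] by simp
  also have "\<dots> = conc q (conc (lv A i) y)"
    using lv_path_mid[OF q, of i A] i n by (simp add: conc_append)
  also have "\<dots> = conc q (sem (A, id, B) z)" using sem_leaf[OF i(1,2)] i(4) by simp
  finally show ?thesis .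
qed

definition A0 :: "nat \<Rightarrow> tree" where
  "A0 d = Node (Node (replicate d Leaf) # replicate (d - 1) Leaf)"

definition B0 :: "nat \<Rightarrow> tree" where
  "B0 d = Node (replicate (d - 1) Leaf @ [Node (replicate d Leaf)])"

lemma leaves_A0: "d \<ge> 1 \<Longrightarrow> leaves (A0 d) = map (\<lambda>j. [0, j]) [0..<d] @ map (\<lambda>j. [j]) [1..<d]"
  by (simp add: A0_def leavess_replicate_Leaf)

lemma leaves_B0: "d \<ge> 1 \<Longrightarrow> leaves (B0 d) = map (\<lambda>j. [j]) [0..<d - 1] @ map (\<lambda>j. [d - 1, j]) [0..<d]"
  by (simp add: B0_def leavess_append leavess_replicate_Leaf)

lemma A0B0_dary: "d \<ge> 1 \<Longrightarrow> dary d (A0 d) \<and> dary d (B0 d)"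
  by (auto simp: A0_def B0_def)

lemma A0B0_nleaves: "d \<ge> 1 \<Longrightarrow> nleaves (A0 d) = 2 * d - 1 \<and> nleaves (B0 d) = 2 * d - 1"
proof -
  assume d: "d \<ge> 1"
  have "nleaves (A0 d) = length (leaves (A0 d))" "nleaves (B0 d) = length (leaves (B0 d))"
    by (simp_all add: length_leaves)
  then show ?thesis using leaves_A0[OF d] leaves_B0[OF d] d by simp
qed

lemma A0B0_leaf1: "d \<ge> 2 \<Longrightarrow> lv (B0 d) 1 = [0] \<and> lv (A0 d) 1 = [0, 0]"
proof -
  assume d: "d \<ge> 2"
  have "leaves (B0 d) ! 0 = [0]" using leaves_B0[of d] d by (simp add: nth_append)
  moreover have "leaves (A0 d) ! 0 = [0, 0]" using leaves_A0[of d] d by (simp add: nth_append)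
  ultimately show ?thesis by (simp add: lv_def)
qed

lemma A0B0_leafd: "d \<ge> 2 \<Longrightarrow> lv (B0 d) d = [d - 1, 0] \<and> lv (A0 d) d = [0, d - 1]"
proof -
  assume d: "d \<ge> 2"
  have "leaves (B0 d) ! (d - 1) = map (\<lambda>j. [d - 1, j]) [0..<d] ! 0"
  proof -
    have L: "length (map (\<lambda>j. [j]) [0..<d - 1]) = d - 1" by simp
    have "leaves (B0 d) = map (\<lambda>j. [j]) [0..<d - 1] @ map (\<lambda>j. [d - 1, j]) [0..<d]" using leaves_B0 d by simp
    then show ?thesis using nth_append_length_plus[of "map (\<lambda>j. [j]) [0..<d - 1]" "map (\<lambda>j. [d - 1, j]) [0..<d]" 0] unfolding L by simp
  qed
  also have "\<dots> = [d - 1, 0]" using d by simp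
  finally have 1: "leaves (B0 d) ! (d - 1) = [d - 1, 0]" .
  have "leaves (A0 d) ! (d - 1) = map (\<lambda>j. [0, j]) [0..<d] ! (d - 1)"
    using leaves_A0[of d] d by (simp add: nth_append)
  also have "\<dots> = [0, d - 1]" using d by simp
  finally show ?thesis using 1 by (simp add: lv_def)
qed

lemma A0B0_leaflast: "d \<ge> 2 \<Longrightarrow> lv (B0 d) (2 * d - 1) = [d - 1, d - 1] \<and> lv (A0 d) (2 * d - 1) = [d - 1]"
proof -
  assume d: "d \<ge> 2"
  have i1: "2 * d - 1 - 1 = (d - 1) + (d - 1)" using d by simp
  have L: "length (map (\<lambda>j. [j]) [0..<d - 1]) = d - 1" by simp
  have "leaves (B0 d) ! ((d - 1) + (d - 1)) = map (\<lambda>j. [d - 1, j]) [0..<d] ! (d - 1)"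
  proof -
    have "leaves (B0 d) = map (\<lambda>j. [j]) [0..<d - 1] @ map (\<lambda>j. [d - 1, j]) [0..<d]" using leaves_B0 d by simp
    then show ?thesis using nth_append_length_plus[of "map (\<lambda>j. [j]) [0..<d - 1]" "map (\<lambda>j. [d - 1, j]) [0..<d]" "d - 1"] unfolding L by simp
  qed
  also have "\<dots> = [d - 1, d - 1]" using d by simp
  finally have 1: "leaves (B0 d) ! (2 * d - 1 - 1) = [d - 1, d - 1]" using i1 by simp
  have i2: "2 * d - 1 - 1 = d + (d - 2)" using d by simp
  have L2: "length (map (\<lambda>j. [0, j]) [0..<d]) = d" by simp
  have "leaves (A0 d) ! (d + (d - 2)) = map (\<lambda>j. [j]) [1..<d] ! (d - 2)"
  proof -
    have "leaves (A0 d) = map (\<lambda>j. [0, j]) [0..<d] @ map (\<lambda>j. [j]) [1..<d]" using leaves_A0 d by simp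
    then show ?thesis using nth_append_length_plus[of "map (\<lambda>j. [0, j]) [0..<d]" "map (\<lambda>j. [j]) [1..<d]" "d - 2"] unfolding L2 by simp
  qed
  also have "\<dots> = [d - 1]" using d nth_upt[of 1 "d - 2" d] by simp
  finally have 2: "leaves (A0 d) ! (2 * d - 1 - 1) = [d - 1]" using i2 by simp
  show ?thesis using 1 2 by (simp add: lv_def)
qed


definition ones :: "nat \<Rightarrow> nat" where "ones = (\<lambda>_. 1)"

lemma conc_nth_lt: "i < length p \<Longrightarrow> conc p y i = p ! i"
  by (simp add: conc_def)

lemma pref_nth: "pref p x \<Longrightarrow> i < length p \<Longrightarrow> x i = p ! i"
  by (simp add: pref_def)

context
  fixes d :: nat
  assumes d2: "d \<ge> 2"
begin

lemma ones_Xs: "ones \<in> Xs d" using d2 by (simp add: ones_def Xs_def)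

lemma dd1: "d \<ge> 1" using d2 by simp

abbreviation "r0 \<equiv> (A0 d, id, B0 d)"

lemma r0_props: "dary d (A0 d)" "dary d (B0 d)" "nleaves (A0 d) = nleaves (B0 d)" "nleaves (B0 d) = 2 * d - 1"
  using A0B0_dary[OF dd1] A0B0_nleaves[OF dd1] by auto

lemma s0_1: "sem r0 (conc [0] z) = conc [0, 0] z"
  using sem_leaf[of 1 "B0 d" "A0 d" id z] A0B0_leaf1[OF d2] r0_props(4) d2 by simp

lemma s0_d: "sem r0 (conc [d - 1, 0] z) = conc [0, d - 1] z"
  using sem_leaf[of d "B0 d" "A0 d" id z] A0B0_leafd[OF d2] r0_props(4) d2 by simp

lemma s0_last: "sem r0 (conc [d - 1, d - 1] z) = conc [d - 1] z"
  using sem_leaf[of "2 * d - 1" "B0 d" "A0 d" id z] A0B0_leaflast[OF d2] r0_props(4) d2 by simp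

definition aE :: "nat list \<Rightarrow> triple set" where
  "aE q = cls d (path d q (A0 d), id, path d q (B0 d))"

lemma aE_valid: "\<forall>a\<in>set q. a < d \<Longrightarrow> (path d q (A0 d), id, path d q (B0 d)) \<in> valid d"
  using path_valid r0_props by blast

lemma aE_carrier: "\<forall>a\<in>set q. a < d \<Longrightarrow> aE q \<in> carrier (V d) \<and> aE q \<in> F d"
  using aE_valid cls_carrier[OF d2] F_mem[OF d2] by (simp add: aE_def)

lemma aE_out: "\<forall>a\<in>set q. a < d \<Longrightarrow> z \<in> Xs d \<Longrightarrow> \<not> pref q z \<Longrightarrow> evl (aE q) z = z"
  using evl_cls[OF d2 aE_valid] path_sem_out r0_props by (simp add: aE_def)

lemma aE_in: "\<forall>a\<in>set q. a < d \<Longrightarrow> z \<in> Xs d \<Longrightarrow> evl (aE q) (conc q z) = conc q (sem r0 z)"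
proof -
  assume q: "\<forall>a\<in>set q. a < d" and z: "z \<in> Xs d"
  have "conc q z \<in> Xs d" using conc_Xs q z by blast
  then show ?thesis using evl_cls[OF d2 aE_valid[OF q]] path_sem_in[OF q r0_props(1-3) z] by (simp add: aE_def)
qed

lemma inv_fix: "a \<in> carrier (V d) \<Longrightarrow> z \<in> Xs d \<Longrightarrow> evl a z = z \<Longrightarrow> evl (inv\<^bsub>V d\<^esub> a) z = z"
  using evl_inv(1)[OF d2] by metis

lemma inv_val: "a \<in> carrier (V d) \<Longrightarrow> y \<in> Xs d \<Longrightarrow> evl a y = x \<Longrightarrow> evl (inv\<^bsub>V d\<^esub> a) x = y"
  using evl_inv(1)[OF d2] by metis

lemma Xs_conc: "\<forall>a\<in>set q. a < d \<Longrightarrow> conc q ones \<in> Xs d"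
  using conc_Xs ones_Xs by blast

lemma notpref_at: "i < length p \<Longrightarrow> x i \<noteq> p ! i \<Longrightarrow> \<not> pref p x"
  by (auto simp: pref_def)

definition cE :: "nat list \<Rightarrow> triple set" where
  "cE q = aE q \<otimes>\<^bsub>V d\<^esub> aE (q @ [d - 1, 0]) \<otimes>\<^bsub>V d\<^esub> inv\<^bsub>V d\<^esub> (aE q) \<otimes>\<^bsub>V d\<^esub> inv\<^bsub>V d\<^esub> (aE (q @ [d - 1, 0]))"

lemma cE_props:
  assumes q: "\<forall>a\<in>set q. a < d"
  shows "cE q \<in> carrier (V d)" "cE q \<in> derived (V d) (F d)"
    "\<And>z. z \<in> Xs d \<Longrightarrow> \<not> pref q z \<Longrightarrow> evl (cE q) z = z"
    "evl (cE q) (conc (q @ [d - 1, 0, 0, 0]) ones) \<noteq> conc (q @ [d - 1, 0, 0, 0]) ones"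
proof -
  let ?q' = "q @ [d - 1, 0]"
  have q': "\<forall>a\<in>set ?q'. a < d" using q d2 by auto
  let ?a = "aE q" and ?b = "aE ?q'"
  have ac: "?a \<in> carrier (V d)" "?a \<in> F d" using aE_carrier[OF q] by auto
  have bc: "?b \<in> carrier (V d)" "?b \<in> F d" using aE_carrier[OF q'] by auto
  have ai: "inv\<^bsub>V d\<^esub> ?a \<in> carrier (V d)" and bi: "inv\<^bsub>V d\<^esub> ?b \<in> carrier (V d)"
    using evl_inv(3)[OF d2 _ ones_Xs] ac bc by blast+
  have m1: "?a \<otimes>\<^bsub>V d\<^esub> ?b \<in> carrier (V d)" using mult_evl[OF d2 ac(1) bc(1)] by blast
  have m2: "?a \<otimes>\<^bsub>V d\<^esub> ?b \<otimes>\<^bsub>V d\<^esub> inv\<^bsub>V d\<^esub> ?a \<in> carrier (V d)" using mult_evl[OF d2 m1 ai] by blast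
  show "cE q \<in> carrier (V d)" using mult_evl[OF d2 m2 bi] by (simp add: cE_def)
  have ev: "evl (cE q) x = evl ?a (evl ?b (evl (inv\<^bsub>V d\<^esub> ?a) (evl (inv\<^bsub>V d\<^esub> ?b) x)))" if x: "x \<in> Xs d" for x
  proof -
    have x1: "evl (inv\<^bsub>V d\<^esub> ?b) x \<in> Xs d" using evl_Xs[OF d2 bi x] .
    have x2: "evl (inv\<^bsub>V d\<^esub> ?a) (evl (inv\<^bsub>V d\<^esub> ?b) x) \<in> Xs d" using evl_Xs[OF d2 ai x1] .
    show ?thesis using mult_evl[OF d2 m2 bi] mult_evl[OF d2 m1 ai] mult_evl[OF d2 ac(1) bc(1)] x x1 x2
      by (simp add: cE_def)
  qed
  have "cE q \<in> derived_set (V d) (F d)" using ac(2) bc(2) unfolding cE_def by blast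
  then show "cE q \<in> derived (V d) (F d)" unfolding derived_def by (rule generate.incl)
  show "evl (cE q) z = z" if z: "z \<in> Xs d" "\<not> pref q z" for z
  proof -
    have nb: "\<not> pref ?q' z" using z(2) pref_append by blast
    have "evl ?b z = z" using aE_out[OF q' z(1) nb] .
    then have 1: "evl (inv\<^bsub>V d\<^esub> ?b) z = z" using inv_fix bc(1) z(1) by blast
    have "evl ?a z = z" using aE_out[OF q z] .
    then have 2: "evl (inv\<^bsub>V d\<^esub> ?a) z = z" using inv_fix ac(1) z(1) by blast
    show ?thesis using ev[OF z(1)] 1 2 aE_out[OF q' z(1) nb] aE_out[OF q z] by simp
  qed
  let ?x = "conc (q @ [d - 1, 0, 0, 0]) ones"
  let ?y = "conc (q @ [d - 1, 0, 0]) ones"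
  let ?y2 = "conc (q @ [d - 1, d - 1, 0, 0]) ones"
  have w: "conc [0, 0] ones \<in> Xs d" "conc [0] ones \<in> Xs d" using Xs_conc[of "[0,0]"] Xs_conc[of "[0]"] d2 by auto
  have xX: "?x \<in> Xs d" "?y \<in> Xs d" "?y2 \<in> Xs d" using Xs_conc q d2 by auto
  have yy: "?y = conc ?q' (conc [0] ones)" by (simp add: conc_append[symmetric])
  have "evl ?b ?y = conc ?q' (sem r0 (conc [0] ones))"
    unfolding yy using aE_in[OF q' w(2)] .
  also have "\<dots> = ?x" using s0_1 by (simp add: conc_append[symmetric])
  finally have "evl (inv\<^bsub>V d\<^esub> ?b) ?x = ?y" using inv_val bc(1) xX(2) by blast
  moreover have "evl ?a ?y2 = ?y"
  proof -
    have yy2: "?y2 = conc q (conc [d - 1, d - 1] (conc [0, 0] ones))" by (simp add: conc_append[symmetric])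
    have zz: "conc [d - 1, d - 1] (conc [0, 0] ones) \<in> Xs d" using w(1) conc_Xs[of "[d-1,d-1]" d] d2 by simp
    have "evl ?a ?y2 = conc q (sem r0 (conc [d - 1, d - 1] (conc [0, 0] ones)))"
      unfolding yy2 using aE_in[OF q zz] .
    also have "\<dots> = conc q (conc [d - 1] (conc [0, 0] ones))" using s0_last by simp
    also have "\<dots> = ?y" by (simp add: conc_append[symmetric])
    finally show ?thesis .
  qed
  moreover have "evl (inv\<^bsub>V d\<^esub> ?a) ?y = ?y2" using inv_val ac(1) xX(3) calculation(2) by blast
  moreover have "evl ?b ?y2 = ?y2"
  proof (rule aE_out[OF q' xX(3)])
    have "?y2 (length q + 1) = d - 1" by (simp add: conc_def nth_append)
    moreover have "?q' ! (length q + 1) = 0" by (simp add: nth_append)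
    ultimately show "\<not> pref ?q' ?y2" using notpref_at[of "length q + 1" ?q' ?y2] d2 by simp
  qed
  ultimately have "evl (cE q) ?x = ?y" using ev[OF xX(1)] by simp
  moreover have "?y (length q + 3) \<noteq> ?x (length q + 3)"
    by (simp add: conc_def nth_append ones_def)
  ultimately show "evl (cE q) ?x \<noteq> ?x" by metis
qed

end


lemma noncone:
  assumes "u \<noteq> t"
    and c: "c = (if length u < length t then t ! length u else if length t < length u then u ! length t else 0)"
    and a: "a = (if c = 0 then 1 else 0)"
  shows "\<not> pref (u @ [a]) (conc t (conc [a] y))"
proof
  assume p: "pref (u @ [a]) (conc t (conc [a] y))"
  let ?z = "conc t (conc [a] y)"
  have ac: "a \<noteq> c" using a by simp
  show False
  proof (cases "length u < length t")
    case True
    have "?z (length u) = a" using pref_nth[OF p, of "length u"] by simp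
    moreover have "?z (length u) = t ! length u" using True by (simp add: conc_def)
    ultimately show False using ac c True by simp
  next
    case False
    show False
    proof (cases "length t < length u")
      case True
      have "?z (length t) = a" by (simp add: conc_def)
      moreover have "?z (length t) = u ! length t"
        using pref_nth[OF p, of "length t"] True by (simp add: nth_append)
      ultimately show False using ac c True False by simp
    next
      case False2: False
      then have l: "length u = length t" using False by simp
      have "u ! i = t ! i" if "i < length u" for i
      proof -
        have "?z i = u ! i" using pref_nth[OF p, of i] that by (simp add: nth_append)
        moreover have "?z i = t ! i" using that l by (simp add: conc_def)
        ultimately show ?thesis by simp
      qed
      then have "u = t" using l by (simp add: nth_equalityI)
      then show False using assms(1) by simp
    qed
  qed
qed

lemma notpref_at2: "i < length P \<Longrightarrow> x i \<noteq> P ! i \<Longrightarrow> \<not> pref P x"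
  by (auto simp: pref_def)

lemma disjoint_cones:
  assumes "n \<noteq> m"
  shows "\<not> pref (p @ replicate m 0 @ [1]) (conc (p @ replicate n 0 @ [1]) z)"
proof (cases "m < n")
  case True
  let ?i = "length p + m"
  have "(p @ replicate m 0 @ [1]) ! ?i = 1" by (simp add: nth_append)
  moreover have "conc (p @ replicate n 0 @ [1]) z ?i = 0"
    using True by (simp add: conc_def nth_append)
  moreover have "?i < length (p @ replicate m 0 @ [1])" by simp
  ultimately show ?thesis using notpref_at2[of ?i "p @ replicate m 0 @ [1]"] by simp
next
  case False
  then have nm: "n < m" using assms by simp
  let ?i = "length p + n"
  have "(p @ replicate m 0 @ [1]) ! ?i = 0" using nm by (simp add: nth_append)
  moreover have "conc (p @ replicate n 0 @ [1]) z ?i = 1"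
    by (simp add: conc_def nth_append)
  moreover have "?i < length (p @ replicate m 0 @ [1])" using nm by simp
  ultimately show ?thesis using notpref_at2[of ?i "p @ replicate m 0 @ [1]"] by simp
qed

context
  fixes d :: nat
  assumes d2: "d \<ge> 2"
begin

lemma exists_cone:
  assumes w: "w \<in> carrier (V d)" "w \<noteq> \<one>\<^bsub>V d\<^esub>"
  shows "\<exists>p. (\<forall>a\<in>set p. a < d) \<and> (\<forall>y\<in>Xs d. \<not> pref p (evl w (conc p y)))"
proof -
  obtain r where r: "r \<in> valid d" "w = cls d r" using get_rep[OF d2 w(1)] by blast
  obtain T \<sigma> U where rr: "r = (T, \<sigma>, U)" by (cases r) auto
  have v: "dary d T" "dary d U" "nleaves T = nleaves U" "\<sigma> permutes {1..nleaves U}"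
    using r rr by (auto simp: valid_iff)
  have "\<exists>k. 1 \<le> k \<and> k \<le> nleaves U \<and> lv U k \<noteq> lv T (\<sigma> k)"
  proof (rule ccontr)
    assume "\<not> ?thesis"
    then have all: "\<And>k. 1 \<le> k \<Longrightarrow> k \<le> nleaves U \<Longrightarrow> lv U k = lv T (\<sigma> k)" by blast
    have "\<forall>x\<in>Xs d. evl w x = evl \<one>\<^bsub>V d\<^esub> x"
    proof
      fix x assume x: "x \<in> Xs d"
      obtain k y where k: "1 \<le> k" "k \<le> nleaves U" "y \<in> Xs d" "x = conc (lv U k) y"
        using lv_cover[OF v(2) x] by blast
      have "evl w x = sem r x" using evl_cls[OF d2 r(1) x] r(2) by simp
      also have "\<dots> = x" using sem_leaf[OF k(1,2)] k(4) all[OF k(1,2)] rr by simp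
      finally show "evl w x = evl \<one>\<^bsub>V d\<^esub> x" using evl_one[OF d2 x] by simp
    qed
    then have "w = \<one>\<^bsub>V d\<^esub>" using V_ext[OF d2 w(1) one_carrier[OF d2]] by blast
    then show False using w(2) by simp
  qed
  then obtain k where k: "1 \<le> k" "k \<le> nleaves U" "lv U k \<noteq> lv T (\<sigma> k)" by blast
  let ?u = "lv U k" and ?t = "lv T (\<sigma> k)"
  define c where "c = (if length ?u < length ?t then ?t ! length ?u else if length ?t < length ?u then ?u ! length ?t else 0)"
  define a where "a = (if c = 0 then 1 else (0::nat))"
  have ad: "a < d" using d2 by (simp add: a_def)
  have sk: "1 \<le> \<sigma> k" "\<sigma> k \<le> nleaves T" using perm_range[OF v(4) k(1,2)] v(3) by auto
  have "\<not> pref (?u @ [a]) (evl w (conc (?u @ [a]) y))" if y: "y \<in> Xs d" for y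
  proof -
    have x: "conc (?u @ [a]) y \<in> Xs d" using conc_Xs lv_letters[OF v(2) k(1,2)] ad y by auto
    have "evl w (conc (?u @ [a]) y) = sem r (conc ?u (conc [a] y))"
      using evl_cls[OF d2 r(1) x] r(2) by (simp add: conc_append)
    also have "\<dots> = conc ?t (conc [a] y)" using sem_leaf[OF k(1,2)] rr by simp
    finally show ?thesis using noncone[OF k(3) c_def a_def] by simp
  qed
  moreover have "\<forall>b\<in>set (?u @ [a]). b < d" using lv_letters[OF v(2) k(1,2)] ad by auto
  ultimately show ?thesis by blast
qed

lemma conj_inf:
  assumes w: "w \<in> carrier (V d)" and p: "\<forall>y\<in>Xs d. \<not> pref p (evl w (conc p y))"
    and hc: "\<And>n::nat. h n \<in> carrier (V d)" and hH: "\<And>n. h n \<in> H"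
    and xs: "\<And>n. xs n \<in> Xs d" and xq: "\<And>n. pref (qs n) (xs n)"
    and mv: "\<And>n. evl (h n) (xs n) \<noteq> xs n"
    and sup: "\<And>n z. z \<in> Xs d \<Longrightarrow> \<not> pref (qs n) z \<Longrightarrow> evl (h n) z = z"
    and qp: "\<And>n z. pref (qs n) z \<Longrightarrow> pref p z"
    and dis: "\<And>n m. n \<noteq> m \<Longrightarrow> \<not> pref (qs m) (xs n)"
  shows "infinite (conjugates (V d) H w)"
proof -
  define f where "f n = inv\<^bsub>V d\<^esub> (h n) \<otimes>\<^bsub>V d\<^esub> w \<otimes>\<^bsub>V d\<^esub> h n" for n
  have ic: "inv\<^bsub>V d\<^esub> (h n) \<in> carrier (V d)" for n using evl_inv(3)[OF d2 hc xs] .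
  have fe: "evl (f n) z = evl (inv\<^bsub>V d\<^esub> (h n)) (evl w (evl (h n) z))" if z: "z \<in> Xs d" for n z
  proof -
    have m1: "inv\<^bsub>V d\<^esub> (h n) \<otimes>\<^bsub>V d\<^esub> w \<in> carrier (V d)" using mult_evl[OF d2 ic w] by blast
    have "evl (h n) z \<in> Xs d" using evl_Xs[OF d2 hc z] .
    then show ?thesis using mult_evl[OF d2 m1 hc] mult_evl[OF d2 ic w] z by (simp add: f_def)
  qed
  have injf: "inj f"
  proof
    fix n m assume eq: "f n = f m"
    show "n = m"
    proof (rule ccontr)
      assume nm: "n \<noteq> m"
      let ?x = "xs n"
      have px: "pref p ?x" using qp xq by blast
      have sx: "sdrop (length p) ?x \<in> Xs d" using sdrop_Xs[OF xs] .
      have "\<not> pref p (evl w (conc p (sdrop (length p) ?x)))" using p sx by blast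
      then have gx: "\<not> pref p (evl w ?x)" unfolding pref_conc_eq[OF px] .
      then have gq: "\<not> pref (qs m) (evl w ?x)" "\<not> pref (qs n) (evl w ?x)" using qp by blast+
      have gX: "evl w ?x \<in> Xs d" using evl_Xs[OF d2 w xs] .
      have hm: "evl (h m) ?x = ?x" using sup[OF xs dis[OF nm]] .
      have "evl (f m) ?x = evl w ?x"
        using fe[OF xs, of m] hm inv_fix[OF d2 hc gX sup[OF gX gq(1)]] by simp
      moreover have "evl (f n) ?x = evl (f m) ?x" using eq by simp
      ultimately have 1: "evl (inv\<^bsub>V d\<^esub> (h n)) (evl w (evl (h n) ?x)) = evl w ?x" using fe[OF xs] by simp
      have hX: "evl (h n) ?x \<in> Xs d" using evl_Xs[OF d2 hc xs] .
      have wX: "evl w (evl (h n) ?x) \<in> Xs d" using evl_Xs[OF d2 w hX] .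
      have "evl w (evl (h n) ?x) = evl (h n) (evl (inv\<^bsub>V d\<^esub> (h n)) (evl w (evl (h n) ?x)))"
        using evl_inv(2)[OF d2 hc wX] by simp
      also have "\<dots> = evl (h n) (evl w ?x)" using 1 by simp
      finally have "evl w (evl (h n) ?x) = evl (h n) (evl w ?x)" .
      also have "\<dots> = evl w ?x" using sup[OF gX gq(2)] .
      finally have "evl w (evl (h n) ?x) = evl w ?x" .
      then have "evl (inv\<^bsub>V d\<^esub> w) (evl w (evl (h n) ?x)) = evl (inv\<^bsub>V d\<^esub> w) (evl w ?x)" by simp
      then have "evl (h n) ?x = ?x" using evl_inv(1)[OF d2 w hX] evl_inv(1)[OF d2 w xs] by simp
      then show False using mv by blast
    qed
  qed
  have "range f \<subseteq> conjugates (V d) H w"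
  proof
    fix y assume "y \<in> range f"
    then obtain n where n: "y = f n" by blast
    have "\<exists>hh. f n = inv\<^bsub>V d\<^esub> hh \<otimes>\<^bsub>V d\<^esub> w \<otimes>\<^bsub>V d\<^esub> hh \<and> hh \<in> H"
      using hH[of n] unfolding f_def by (intro exI[of _ "h n"]) simp
    then show "y \<in> conjugates (V d) H w" unfolding conjugates_def n by (rule CollectI)
  qed
  moreover have "infinite (range f)"
  proof
    assume "finite (range f)"
    then have "finite (UNIV :: nat set)" using finite_imageD[of f UNIV] injf by blast
    then show False by simp
  qed
  ultimately show ?thesis by (rule infinite_super)
qed

end

theorem mainTheorem6:
  fixes d :: nat and W :: "triple set set"
  assumes "d \<ge> 2"
    and "subgroup W (V d)"
    and "derived (V d) (F d) \<subseteq> W"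
  shows "(\<forall>w\<in>W. w \<noteq> \<one>\<^bsub>V d\<^esub> \<longrightarrow> infinite (conjugates (V d) (derived (V d) (F d)) w))
       \<and> (F d \<subseteq> W \<longrightarrow> (\<forall>w\<in>W. w \<noteq> \<one>\<^bsub>V d\<^esub> \<longrightarrow> infinite (conjugates (V d) (F d) w)))"
proof -
  have d2: "d \<ge> 2" by (rule assms(1))
  have main: "infinite (conjugates (V d) (derived (V d) (F d)) w) \<and> infinite (conjugates (V d) (F d) w)"
    if wW: "w \<in> W" "w \<noteq> \<one>\<^bsub>V d\<^esub>" for w
  proof -
    have wc: "w \<in> carrier (V d)" using subgroup.subset[OF assms(2)] wW(1) by blast
    obtain p where p: "\<forall>a\<in>set p. a < d" "\<forall>y\<in>Xs d. \<not> pref p (evl w (conc p y))"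
      using exists_cone[OF d2 wc wW(2)] by blast
    define qs where "qs n = p @ replicate n 0 @ [1]" for n :: nat
    have ql: "\<forall>a\<in>set (qs n). a < d" for n using p(1) d2 by (auto simp: qs_def)
    have qp: "pref (qs n) z \<Longrightarrow> pref p z" for n z using pref_append unfolding qs_def by blast
    define xs1 where "xs1 n = conc (qs n @ [d - 1, 0, 0, 0]) ones" for n
    have l1: "\<forall>a\<in>set (qs n @ [d - 1, 0, 0, 0]). a < d" for n using ql d2 by auto
    have part1: "infinite (conjugates (V d) (derived (V d) (F d)) w)"
    proof (rule conj_inf[OF d2 wc p(2), where h = "\<lambda>n. cE d (qs n)" and xs = xs1 and qs = qs])
      show "cE d (qs n) \<in> carrier (V d)" for n using cE_props(1)[OF d2 ql] .
      show "cE d (qs n) \<in> derived (V d) (F d)" for n using cE_props(2)[OF d2 ql] .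
      show "xs1 n \<in> Xs d" for n using Xs_conc[OF d2 l1] by (simp add: xs1_def)
      show "pref (qs n) (xs1 n)" for n by (simp add: xs1_def conc_append)
      show "evl (cE d (qs n)) (xs1 n) \<noteq> xs1 n" for n using cE_props(4)[OF d2 ql] by (simp add: xs1_def)
      show "evl (cE d (qs n)) z = z" if "z \<in> Xs d" "\<not> pref (qs n) z" for n z using cE_props(3)[OF d2 ql that] .
      show "pref p z" if "pref (qs n) z" for n z using qp that .
      show "\<not> pref (qs m) (xs1 n)" if "n \<noteq> m" for n m
      proof -
        have e: "xs1 n = conc (qs n) (conc [d - 1, 0, 0, 0] ones)" by (simp add: xs1_def conc_append)
        show ?thesis unfolding e qs_def by (rule disjoint_cones[OF that])
      qed
    qed
    define xs2 where "xs2 n = conc (qs n @ [0]) ones" for n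
    have l2: "\<forall>a\<in>set (qs n @ [0]). a < d" for n using ql d2 by auto
    have part2: "infinite (conjugates (V d) (F d) w)"
    proof (rule conj_inf[OF d2 wc p(2), where h = "\<lambda>n. aE d (qs n)" and xs = xs2 and qs = qs])
      show "aE d (qs n) \<in> carrier (V d)" for n using aE_carrier[OF d2 ql] by blast
      show "aE d (qs n) \<in> F d" for n using aE_carrier[OF d2 ql] by blast
      show "xs2 n \<in> Xs d" for n using Xs_conc[OF d2 l2] by (simp add: xs2_def)
      show "pref (qs n) (xs2 n)" for n by (simp add: xs2_def conc_append)
      show "evl (aE d (qs n)) (xs2 n) \<noteq> xs2 n" for n
      proof -
        have o: "conc [0] ones \<in> Xs d" using Xs_conc[OF d2, of "[0]"] d2 by simp
        have "evl (aE d (qs n)) (xs2 n) = conc (qs n) (conc [0, 0] ones)"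
          using aE_in[OF d2 ql o] s0_1[OF d2] by (simp add: xs2_def conc_append)
        moreover have "conc (qs n) (conc [0, 0] ones) (length (qs n) + 1) \<noteq> xs2 n (length (qs n) + 1)"
          by (simp add: xs2_def conc_def nth_append ones_def)
        ultimately show ?thesis by metis
      qed
      show "evl (aE d (qs n)) z = z" if "z \<in> Xs d" "\<not> pref (qs n) z" for n z using aE_out[OF d2 ql that] .
      show "pref p z" if "pref (qs n) z" for n z using qp that .
      show "\<not> pref (qs m) (xs2 n)" if "n \<noteq> m" for n m
      proof -
        have e: "xs2 n = conc (qs n) (conc [0] ones)" by (simp add: xs2_def conc_append)
        show ?thesis unfolding e qs_def by (rule disjoint_cones[OF that])
      qed
    qed
    show ?thesis using part1 part2 by blast
  qed
  then show ?thesis by blast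
qed


end
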